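(* Let $(D,x,y)$ be a decorated resolution configuration, let $Z_1\in Z(D)$ be a leaf of $D$, and let $A_1\in A(D)$ be the arc one of whose endpoints lies on $Z_1$. Let $Z_2\in Z(D)$ be the circle containing the other endpoint of $A_1$, let $Z_1^*\in Z(s(D))$ be the circle containing both endpoints of the dual arc $A_1^*$, and let $Z_2^*$ be the unique circle of $Z(s_{A(D)\setminus\{A_1\}}(D))\setminus\{Z_1\}$ containing an endpoint of $A_1$. Let $D'$ be obtained from $D$ by deleting $Z_1$ and $A_1$, and let $(D',x',y')$ be the decorated resolution configuration with $y'$ induced from $y$ on $Z(D')$, $x'$ induced from $x$ on $Z(s(D'))\setminus\{Z_2^*\}=Z(s(D))\setminus\{Z_1^*\}$, and $x'(Z_2^* )=x(Z_1^* )$ if $y(Z_1)=x_+$, and $x'(Z_2^* )=x_+$ otherwise. Then $P(D,x,y)\cong P(D',x',y')\times\{0,1\}$, where $\{0,1\}$ is the two-element poset with $0\prec 1$.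
   Context: A resolution configuration $D=(Z(D),A(D))$ consists of a finite set $Z(D)$ of circles immersed in $S^2$ (union has only transverse double points) and a finite totally ordered set $A(D)$ of disjoint embedded arcs meeting the circles exactly in their endpoints. Surgery $s_A(D)$ along $A$: in a small disk around $A$ meeting the circles in segments $\alpha$ (ends $z,w$) and $\beta$ (ends $x,y$), $z,x$ on one side of $A$, replace $\alpha\cup\beta$ by strands $z$–$y$ and $x$–$w$ crossing once; arcs become $A(D)\setminus\{A\}$; $s_{A'}(D)$ for $A'\subseteq A(D)$, $s(D)=s_{A(D)}(D)$. $A$ is an $\eta$-, $\Delta$-, or $m$-arc according as surgery changes the number of circles by $0$, $+1$, $-1$. The graph $G(D)$ has a vertex for each circle and an edge for each arc (joining the circles containing its endpoints). A leaf of $D$ is a circle whose vertex has degree $1$ in $G(D)$. The dual arc $A^*$ of $A\in A(D)$ is a small arc parallel to $A$ whose endpoints lie on the two strands created by surgery along $A$ (so it is an arc of the dual configuration with circles $Z(s(D))$). Labeled configurations, the partial order $\prec$, decorated configurations and $P(D,x,y)$: a labeling assigns $x_+$ or $x_-$ to each circle; $(E,y)\prec(D,x)$ is generated by: $D=s_A(E)$ for a single arc $A$, $x,y$ agree on circles not meeting $\partial A$, and for a $\Delta$-arc splitting $Z_i$ into $Z_j,Z_k$: $y(Z_i)=x(Z_j)=x(Z_k)=x_-$ or ($y(Z_i)=x_+$, $\{x(Z_j),x(Z_k)\}=\{x_+,x_-\}$); for an $m$-arc merging $Z_i,Z_j$ into $Z_k$: $y(Z_i)=y(Z_j)=x(Z_k)=x_+$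 or ($\{y(Z_i),y(Z_j)\}=\{x_+,x_-\}$, $x(Z_k)=x_-$); no relation for $\eta$-arcs; then take transitive closure. A decorated resolution configuration $(D,x,y)$ has $x$ labeling $Z(s(D))$, $y$ labeling $Z(D)$, $(D,y)\preceq(s(D),x)$, and $P(D,x,y)=\{(E,z):(D,y)\preceq(E,z)\preceq(s(D),x)\}$. *)

theory Defs
  imports Main "HOL-Library.FuncSet"
begin

text \<open>
A configuration consists of a finite set of marked points lying on the circles;
the circles are the cycles of the permutation nxt (each circle is oriented and
nxt r is the next marked point along the circle after r).  lft r records whether
the arc at r leaves the circle on the left of its orientation (w.r.t. the
orientation of the sphere).  arcs is a set of pairwise disjoint two-element
sets of marked points (the endpoints of the arcs).  Marked points not on any
arc are plain markers (needed so that arc-free circles are represented).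
\<close>

record 'p rconf =
  pts  :: "'p set"
  nxt  :: "'p \<Rightarrow> 'p"
  lft  :: "'p \<Rightarrow> bool"
  arcs :: "'p set set"

definition wf_conf :: "'p rconf \<Rightarrow> bool" where
  "wf_conf D \<longleftrightarrow> finite (pts D) \<and> bij_betw (nxt D) (pts D) (pts D)
     \<and> (\<forall>A\<in>arcs D. card A = 2 \<and> A \<subseteq> pts D)
     \<and> (\<forall>A\<in>arcs D. \<forall>A'\<in>arcs D. A \<noteq> A' \<longrightarrow> A \<inter> A' = {})"

text \<open>Nodes are ends of strands at marked points: (r,False) is the strand end
just before r, (r,True) the strand end just after r (along the orientation).
The edges of s_B(D): the circle segments between consecutive marked points,
the local strand through r if r is not an endpoint of a surgered arc, and for a
surgered arc {p,q} the two new strands z--y, x--w (crossing once).\<close>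

type_synonym 'p node = "'p \<times> bool"

definition sedges :: "'p rconf \<Rightarrow> 'p set set \<Rightarrow> ('p node \<times> 'p node) set" where
  "sedges D B =
     {((r,True),(nxt D r,False)) | r. r \<in> pts D}
   \<union> {((r,False),(r,True)) | r. r \<in> pts D \<and> r \<notin> \<Union>B}
   \<union> {((p,False),(q,False)) | p q. {p,q} \<in> B \<and> p \<noteq> q \<and> lft D p = lft D q}
   \<union> {((p,True),(q,True)) | p q. {p,q} \<in> B \<and> p \<noteq> q \<and> lft D p = lft D q}
   \<union> {((p,False),(q,True)) | p q. {p,q} \<in> B \<and> p \<noteq> q \<and> lft D p \<noteq> lft D q}"

definition circles :: "'p rconf \<Rightarrow> 'p set set \<Rightarrow> 'p node set set" where
  "circles D B = {{m. (n,m) \<in> (sedges D B \<union> (sedges D B)\<inverse>)\<^sup>*} | n. n \<in> pts D \<times> UNIV}"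

definition on_circle :: "'p \<Rightarrow> 'p node set \<Rightarrow> bool" where
  "on_circle r C \<longleftrightarrow> (r,True) \<in> C"

definition meets :: "'p node set \<Rightarrow> 'p set \<Rightarrow> bool" where
  "meets C A \<longleftrightarrow> (\<exists>r\<in>A. \<exists>s. (r,s) \<in> C)"

datatype lab = xplus | xminus

text \<open>Labeled configurations (s_B(D), l) with B \<subseteq> A(D); the generating
relation of the partial order: (s_B(D),l) \<prec> (s_{B \<union> {A}}(D), l').\<close>
definition delta_rel :: "'p rconf \<Rightarrow> 'p set set \<Rightarrow> ('p node set \<Rightarrow> lab) \<Rightarrow> 'p set set
                          \<Rightarrow> ('p node set \<Rightarrow> lab) \<Rightarrow> 'p set \<Rightarrow> bool" where
  "delta_rel D B l B' l' A \<longleftrightarrow>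
     card (circles D B') = card (circles D B) + 1 \<and>
     (\<exists>Zi Zj Zk. {C\<in>circles D B. meets C A} = {Zi} \<and> {C\<in>circles D B'. meets C A} = {Zj,Zk}
        \<and> Zj \<noteq> Zk \<and>
        ((l Zi = xminus \<and> l' Zj = xminus \<and> l' Zk = xminus) \<or>
         (l Zi = xplus \<and> {l' Zj, l' Zk} = {xplus, xminus})))"

definition m_rel :: "'p rconf \<Rightarrow> 'p set set \<Rightarrow> ('p node set \<Rightarrow> lab) \<Rightarrow> 'p set set
                          \<Rightarrow> ('p node set \<Rightarrow> lab) \<Rightarrow> 'p set \<Rightarrow> bool" where
  "m_rel D B l B' l' A \<longleftrightarrow>
     card (circles D B') + 1 = card (circles D B) \<and>
     (\<exists>Zi Zj Zk. {C\<in>circles D B. meets C A} = {Zi,Zj} \<and> Zi \<noteq> Zj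
        \<and> {C\<in>circles D B'. meets C A} = {Zk} \<and>
        ((l Zi = xplus \<and> l Zj = xplus \<and> l' Zk = xplus) \<or>
         ({l Zi, l Zj} = {xplus, xminus} \<and> l' Zk = xminus)))"

definition step :: "'p rconf \<Rightarrow> ('p set set \<times> ('p node set \<Rightarrow> lab))
                     \<Rightarrow> ('p set set \<times> ('p node set \<Rightarrow> lab)) \<Rightarrow> bool" where
  "step D E F \<longleftrightarrow> (case E of (B,l) \<Rightarrow> case F of (B',l') \<Rightarrow>
     B \<subseteq> arcs D \<and> l \<in> extensional (circles D B) \<and> l' \<in> extensional (circles D B') \<and>
     (\<exists>A \<in> arcs D - B. B' = insert A B \<and>
        (\<forall>C\<in>circles D B. \<not> meets C A \<longrightarrow> C \<in> circles D B' \<and> l' C = l C) \<and>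
        (delta_rel D B l B' l' A \<or> m_rel D B l B' l' A)))"

definition leq :: "'p rconf \<Rightarrow> ('p set set \<times> ('p node set \<Rightarrow> lab))
                     \<Rightarrow> ('p set set \<times> ('p node set \<Rightarrow> lab)) \<Rightarrow> bool" where
  "leq D = (step D)\<^sup>*\<^sup>*"

definition decorated :: "'p rconf \<Rightarrow> ('p node set \<Rightarrow> lab) \<Rightarrow> ('p node set \<Rightarrow> lab) \<Rightarrow> bool" where
  "decorated D x y \<longleftrightarrow> wf_conf D \<and> y \<in> extensional (circles D {})
     \<and> x \<in> extensional (circles D (arcs D)) \<and> leq D ({}, y) (arcs D, x)"

definition Ppos :: "'p rconf \<Rightarrow> ('p node set \<Rightarrow> lab) \<Rightarrow> ('p node set \<Rightarrow> lab)
                     \<Rightarrow> ('p set set \<times> ('p node set \<Rightarrow> lab)) set" where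
  "Ppos D x y = {e. leq D ({}, y) e \<and> leq D e (arcs D, x)}"

definition deg :: "'p rconf \<Rightarrow> 'p node set \<Rightarrow> nat" where
  "deg D Z = card {A\<in>arcs D. card {r\<in>A. on_circle r Z} = 1}
           + 2 * card {A\<in>arcs D. \<forall>r\<in>A. on_circle r Z}"

definition leaf :: "'p rconf \<Rightarrow> 'p node set \<Rightarrow> bool" where
  "leaf D Z \<longleftrightarrow> Z \<in> circles D {} \<and> deg D Z = 1"

text \<open>Z(s(D)) circle containing both endpoints of the dual arc of A, i.e. both
strands created by surgery along A.\<close>
definition dual_arc_circle :: "'p set \<Rightarrow> 'p node set \<Rightarrow> bool" where
  "dual_arc_circle A C \<longleftrightarrow> (\<forall>r\<in>A. \<forall>s. (r,s) \<in> C)"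

definition delete_circ_arc :: "'p rconf \<Rightarrow> 'p node set \<Rightarrow> 'p set \<Rightarrow> 'p rconf" where
  "delete_circ_arc D Z A = D\<lparr>pts := {r\<in>pts D. \<not> on_circle r Z}, arcs := arcs D - {A}\<rparr>"

definition order_iso_betw where
  "order_iso_betw le1 S le2 T f \<longleftrightarrow> bij_betw f S T \<and>
     (\<forall>a\<in>S. \<forall>b\<in>S. le1 a b \<longleftrightarrow> le2 (f a) (f b))"

end

theory Submission
  imports Defs
begin


definition ccomp :: "('a \<times> 'a) set \<Rightarrow> 'a \<Rightarrow> 'a set" where
  "ccomp E n = {m. (n,m) \<in> (E \<union> E\<inverse>)\<^sup>*}"

lemma R_sym: "(a,b) \<in> (E \<union> E\<inverse>)\<^sup>* \<Longrightarrow> (b,a) \<in> (E \<union> E\<inverse>)\<^sup>*"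
proof -
  assume "(a,b) \<in> (E \<union> E\<inverse>)\<^sup>*"
  hence "(b,a) \<in> ((E \<union> E\<inverse>)\<inverse>)\<^sup>*" by (simp add: rtrancl_converse)
  moreover have "(E \<union> E\<inverse>)\<inverse> = E \<union> E\<inverse>" by auto
  ultimately show ?thesis by simp
qed

lemma comp_self[simp]: "n \<in> ccomp E n" by (simp add: ccomp_def)

lemma comp_eq_mem: "m \<in> ccomp E n \<Longrightarrow> ccomp E m = ccomp E n"
  unfolding ccomp_def by (auto intro: rtrancl_trans R_sym)

lemma comp_edge: assumes "(a,b) \<in> E" shows "a \<in> ccomp E n \<longleftrightarrow> b \<in> ccomp E n"
proof -
  have "(a,b) \<in> E \<union> E\<inverse>" "(b,a) \<in> E \<union> E\<inverse>" using assms by auto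
  thus ?thesis unfolding ccomp_def by (auto intro: rtrancl_into_rtrancl)
qed

lemma comp_disj: "ccomp E a \<inter> ccomp E b \<noteq> {} \<Longrightarrow> ccomp E a = ccomp E b"
  by (metis comp_eq_mem disjoint_iff)

lemma restrict_path:
  assumes "(n,m) \<in> (E \<union> E\<inverse>)\<^sup>*" "\<forall>(a,b)\<in>E. a \<in> V \<longleftrightarrow> b \<in> V" "n \<in> V"
  shows "m \<in> V \<and> (n,m) \<in> ((E \<inter> V\<times>V) \<union> (E \<inter> V\<times>V)\<inverse>)\<^sup>*"
  using assms(1)
proof (induction rule: rtrancl_induct)
  case base thus ?case using assms(3) by simp
next
  case (step u w)
  from step.hyps(2) have "(u,w) \<in> E \<or> (w,u) \<in> E" by auto
  with step.IH assms(2) have "w \<in> V" by blast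
  with step.IH step.hyps(2) have "(u,w) \<in> ((E \<inter> V\<times>V) \<union> (E \<inter> V\<times>V)\<inverse>)" by auto
  with step.IH \<open>w \<in> V\<close> show ?case by (meson rtrancl.rtrancl_into_rtrancl)
qed

lemma comp_eq_closed:
  assumes "\<forall>(a,b)\<in>E. a \<in> V \<longleftrightarrow> b \<in> V" "\<forall>(a,b)\<in>F. a \<in> V \<longleftrightarrow> b \<in> V"
    "E \<inter> V\<times>V = F \<inter> V\<times>V" "n \<in> V"
  shows "ccomp E n = ccomp F n"
proof -
  have *: "ccomp E n \<subseteq> ccomp F n" if "\<forall>(a,b)\<in>E. a \<in> V \<longleftrightarrow> b \<in> V" "E \<inter> V\<times>V \<subseteq> F" for E F
  proof
    fix m assume "m \<in> ccomp E n"
    hence "(n,m) \<in> ((E \<inter> V\<times>V) \<union> (E \<inter> V\<times>V)\<inverse>)\<^sup>*"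
      using restrict_path[OF _ that(1) assms(4)] by (auto simp: ccomp_def)
    moreover have "(E \<inter> V\<times>V) \<union> (E \<inter> V\<times>V)\<inverse> \<subseteq> F \<union> F\<inverse>" using that(2) by auto
    ultimately show "m \<in> ccomp F n" unfolding ccomp_def using rtrancl_mono by blast
  qed
  show ?thesis using *[OF assms(1)] *[OF assms(2)] assms(3) by blast
qed

lemma comp_closed_sub:
  assumes "\<forall>(a,b)\<in>E. a \<in> V \<longleftrightarrow> b \<in> V" "n \<in> V" shows "ccomp E n \<subseteq> V"
proof
  fix m assume "m \<in> ccomp E n"
  hence "(n,m) \<in> (E \<union> E\<inverse>)\<^sup>*" by (simp add: ccomp_def)
  from restrict_path[OF this assms] show "m \<in> V" by simp
qed

lemma comp_closed: "\<forall>(a,b)\<in>E. a \<in> ccomp E n \<longleftrightarrow> b \<in> ccomp E n"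
proof (clarify)
  fix a b assume "(a,b) \<in> E" thus "a \<in> ccomp E n \<longleftrightarrow> b \<in> ccomp E n" by (rule comp_edge)
qed

lemma comp_outside:
  assumes "\<forall>e. (e \<in> E \<and> e \<notin> F) \<or> (e \<in> F \<and> e \<notin> E) \<longrightarrow> e \<in> K \<times> K"
    "ccomp E n \<inter> K = {}"
  shows "ccomp F n = ccomp E n"
proof -
  define V where "V = ccomp E n"
  have K: "e \<in> K \<times> K" if "(e \<in> E \<and> e \<notin> F) \<or> (e \<in> F \<and> e \<notin> E)" for e
    using spec[OF assms(1), of e] that by (rule mp)
  have VK: "a \<notin> V" if "a \<in> K" for a using assms(2) that V_def by auto
  have cE: "\<forall>(a,b)\<in>E. a \<in> V \<longleftrightarrow> b \<in> V" unfolding V_def by (rule comp_closed)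
  have cF: "\<forall>(a,b)\<in>F. a \<in> V \<longleftrightarrow> b \<in> V"
  proof (clarify)
    fix a b assume ab: "(a,b) \<in> F"
    show "a \<in> V \<longleftrightarrow> b \<in> V"
    proof (cases "(a,b) \<in> E")
      case True thus ?thesis using cE by auto
    next
      case False
      hence "(a,b) \<in> K \<times> K" using ab K[of "(a,b)"] by simp
      thus ?thesis using VK by auto
    qed
  qed
  have "E \<inter> V\<times>V = F \<inter> V\<times>V"
  proof (intro equalityI subsetI)
    fix e assume e: "e \<in> E \<inter> V\<times>V"
    show "e \<in> F \<inter> V\<times>V"
    proof (rule ccontr)
      assume "e \<notin> F \<inter> V\<times>V" hence "e \<in> K \<times> K" using e K[of e] by auto
      thus False using e VK by auto
    qed
  next
    fix e assume e: "e \<in> F \<inter> V\<times>V"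
    show "e \<in> E \<inter> V\<times>V"
    proof (rule ccontr)
      assume "e \<notin> E \<inter> V\<times>V" hence "e \<in> K \<times> K" using e K[of e] by auto
      thus False using e VK by auto
    qed
  qed
  moreover have nV: "n \<in> V" unfolding V_def by simp
  ultimately have "ccomp E n = ccomp F n" by (rule comp_eq_closed[OF cE cF])
  thus ?thesis by (rule sym)
qed

lemma last_occ:
  assumes "(a,n) \<in> (E \<union> E\<inverse>)\<^sup>*" "\<forall>(u,v)\<in>X. u \<in> K \<and> v \<in> K"
  shows "\<exists>a'\<in>insert a K. (a',n) \<in> ((E - X) \<union> (E - X)\<inverse>)\<^sup>*"
  using assms(1)
proof (induction rule: rtrancl_induct)
  case base thus ?case by blast
next
  case (step u w)
  show ?case
  proof (cases "(u,w) \<in> X \<or> (w,u) \<in> X")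
    case True hence "w \<in> K" using assms(2) by blast
    thus ?thesis by blast
  next
    case False
    hence "(u,w) \<in> (E - X) \<union> (E - X)\<inverse>" using step.hyps(2) by auto
    thus ?thesis using step.IH by (meson rtrancl.rtrancl_into_rtrancl)
  qed
qed

lemma circles_comp: "circles D B = ccomp (sedges D B) ` (pts D \<times> UNIV)"
  unfolding circles_def ccomp_def by auto

lemma circle_node: "C \<in> circles D B \<Longrightarrow> n \<in> C \<Longrightarrow> C = ccomp (sedges D B) n"
  unfolding circles_comp using comp_eq_mem by fastforce

lemma circles_disj: "C \<in> circles D B \<Longrightarrow> C' \<in> circles D B \<Longrightarrow> n \<in> C \<Longrightarrow> n \<in> C' \<Longrightarrow> C = C'"
  using circle_node by metis

lemma comp_in_circles: "n \<in> pts D \<times> UNIV \<Longrightarrow> ccomp (sedges D B) n \<in> circles D B"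
  unfolding circles_comp by blast

lemma sedges_diff:
  "e \<in> sedges D B \<and> e \<notin> sedges D (insert A B) \<or> e \<in> sedges D (insert A B) \<and> e \<notin> sedges D B
   \<Longrightarrow> e \<in> (A \<times> UNIV) \<times> (A \<times> UNIV)"
  unfolding sedges_def by auto

lemma meets_iff: "meets C A \<longleftrightarrow> C \<inter> (A \<times> UNIV) \<noteq> {}"
  unfolding meets_def by auto

lemma G1a: "C \<in> circles D B \<Longrightarrow> \<not> meets C A \<Longrightarrow> C \<in> circles D (insert A B)"
proof -
  assume C: "C \<in> circles D B" and nm: "\<not> meets C A"
  then obtain n where n: "n \<in> pts D \<times> UNIV" "C = ccomp (sedges D B) n" unfolding circles_comp by blast
  have "ccomp (sedges D (insert A B)) n = C"
    using comp_outside[of "sedges D B" "sedges D (insert A B)" "A \<times> UNIV" n] sedges_diff[of _ D B A]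
      nm n(2) by (auto simp: meets_iff)
  thus ?thesis using n(1) comp_in_circles by metis
qed

lemma G1b: "C \<in> circles D (insert A B) \<Longrightarrow> \<not> meets C A \<Longrightarrow> C \<in> circles D B"
proof -
  assume C: "C \<in> circles D (insert A B)" and nm: "\<not> meets C A"
  then obtain n where n: "n \<in> pts D \<times> UNIV" "C = ccomp (sedges D (insert A B)) n" unfolding circles_comp by blast
  have "ccomp (sedges D B) n = C"
    using comp_outside[of "sedges D (insert A B)" "sedges D B" "A \<times> UNIV" n] sedges_diff[of _ D B A]
      nm n(2) by (auto simp: meets_iff)
  thus ?thesis using n(1) comp_in_circles by metis
qed




definition dpred :: "'c set \<Rightarrow> 'c set \<Rightarrow> ('c \<Rightarrow> lab) \<Rightarrow> ('c \<Rightarrow> lab) \<Rightarrow> bool" where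
  "dpred S S2 l l2 \<longleftrightarrow> (\<exists>Zi Zj Zk. S = {Zi} \<and> S2 = {Zj,Zk} \<and> Zj \<noteq> Zk \<and>
        ((l Zi = xminus \<and> l2 Zj = xminus \<and> l2 Zk = xminus) \<or>
         (l Zi = xplus \<and> {l2 Zj, l2 Zk} = {xplus, xminus})))"

definition mpred :: "'c set \<Rightarrow> 'c set \<Rightarrow> ('c \<Rightarrow> lab) \<Rightarrow> ('c \<Rightarrow> lab) \<Rightarrow> bool" where
  "mpred S S2 l l2 \<longleftrightarrow> (\<exists>Zi Zj Zk. S = {Zi,Zj} \<and> Zi \<noteq> Zj \<and> S2 = {Zk} \<and>
        ((l Zi = xplus \<and> l Zj = xplus \<and> l2 Zk = xplus) \<or>
         ({l Zi, l Zj} = {xplus, xminus} \<and> l2 Zk = xminus)))"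

lemma delta_rel_alt: "delta_rel D B l B' l' A \<longleftrightarrow> card (circles D B') = card (circles D B) + 1 \<and>
   dpred {C\<in>circles D B. meets C A} {C\<in>circles D B'. meets C A} l l'"
  unfolding delta_rel_def dpred_def by blast

lemma m_rel_alt: "m_rel D B l B' l' A \<longleftrightarrow> card (circles D B') + 1 = card (circles D B) \<and>
   mpred {C\<in>circles D B. meets C A} {C\<in>circles D B'. meets C A} l l'"
  unfolding m_rel_def mpred_def by blast

lemma dpredE: assumes "dpred S S2 l l2"
  obtains Zi Zj Zk where "S = {Zi}" "S2 = {Zj,Zk}" "Zj \<noteq> Zk"
    "(l Zi = xminus \<and> l2 Zj = xminus \<and> l2 Zk = xminus) \<or>
         (l Zi = xplus \<and> {l2 Zj, l2 Zk} = {xplus, xminus})"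
  using assms unfolding dpred_def by blast

lemma mpredE: assumes "mpred S S2 l l2"
  obtains Zi Zj Zk where "S = {Zi,Zj}" "S2 = {Zk}" "Zi \<noteq> Zj"
    "(l Zi = xplus \<and> l Zj = xplus \<and> l2 Zk = xplus) \<or>
         ({l Zi, l Zj} = {xplus, xminus} \<and> l2 Zk = xminus)"
  using assms unfolding mpred_def by blast

lemma dpred_agree1: assumes "\<forall>C\<in>S. l C = l' C" "\<forall>C\<in>S2. l2 C = l2' C" "dpred S S2 l l2"
  shows "dpred S S2 l' l2'"
proof -
  from assms(3) obtain Zi Zj Zk where w: "S = {Zi}" "S2 = {Zj,Zk}" "Zj \<noteq> Zk"
    "((l Zi = xminus \<and> l2 Zj = xminus \<and> l2 Zk = xminus) \<or>
         (l Zi = xplus \<and> {l2 Zj, l2 Zk} = {xplus, xminus}))" unfolding dpred_def by blast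
  have e: "l Zi = l' Zi" "l2 Zj = l2' Zj" "l2 Zk = l2' Zk" using assms(1,2) w(1,2) by auto
  show ?thesis unfolding dpred_def using w e by (intro exI[of _ Zi] exI[of _ Zj] exI[of _ Zk]) simp
qed

lemma mpred_agree1: assumes "\<forall>C\<in>S. l C = l' C" "\<forall>C\<in>S2. l2 C = l2' C" "mpred S S2 l l2"
  shows "mpred S S2 l' l2'"
proof -
  from assms(3) obtain Zi Zj Zk where w: "S = {Zi,Zj}" "S2 = {Zk}" "Zi \<noteq> Zj"
    "((l Zi = xplus \<and> l Zj = xplus \<and> l2 Zk = xplus) \<or>
         ({l Zi, l Zj} = {xplus, xminus} \<and> l2 Zk = xminus))" unfolding mpred_def by blast
  have e: "l Zi = l' Zi" "l Zj = l' Zj" "l2 Zk = l2' Zk" using assms(1,2) w(1,2) by auto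
  show ?thesis unfolding mpred_def using w e by (intro exI[of _ Zi] exI[of _ Zj] exI[of _ Zk]) simp
qed

lemma dpred_agree: "(\<forall>C\<in>S. l C = l' C) \<Longrightarrow> (\<forall>C\<in>S2. l2 C = l2' C) \<Longrightarrow> dpred S S2 l l2 = dpred S S2 l' l2'"
  using dpred_agree1[of S l l' S2 l2 l2'] dpred_agree1[of S l' l S2 l2' l2] by auto

lemma mpred_agree: "(\<forall>C\<in>S. l C = l' C) \<Longrightarrow> (\<forall>C\<in>S2. l2 C = l2' C) \<Longrightarrow> mpred S S2 l l2 = mpred S S2 l' l2'"
  using mpred_agree1[of S l l' S2 l2 l2'] mpred_agree1[of S l' l S2 l2' l2] by auto

lemma dpred_img1: assumes "inj_on g S2" "dpred S S2 (l \<circ> h) (l2 \<circ> g)" shows "dpred (h ` S) (g ` S2) l l2"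
proof -
  from assms(2) obtain Zi Zj Zk where w: "S = {Zi}" "S2 = {Zj,Zk}" "Zj \<noteq> Zk"
    "((l (h Zi) = xminus \<and> l2 (g Zj) = xminus \<and> l2 (g Zk) = xminus) \<or>
         (l (h Zi) = xplus \<and> {l2 (g Zj), l2 (g Zk)} = {xplus, xminus}))" unfolding dpred_def by auto
  have "g Zj \<noteq> g Zk" using assms(1) w(2,3) by (auto simp: inj_on_def)
  thus ?thesis unfolding dpred_def using w by (intro exI[of _ "h Zi"] exI[of _ "g Zj"] exI[of _ "g Zk"]) simp
qed

lemma mpred_img1: assumes "inj_on h S" "mpred S S2 (l \<circ> h) (l2 \<circ> g)" shows "mpred (h ` S) (g ` S2) l l2"
proof -
  from assms(2) obtain Zi Zj Zk where w: "S = {Zi,Zj}" "S2 = {Zk}" "Zi \<noteq> Zj"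
    "((l (h Zi) = xplus \<and> l (h Zj) = xplus \<and> l2 (g Zk) = xplus) \<or>
         ({l (h Zi), l (h Zj)} = {xplus, xminus} \<and> l2 (g Zk) = xminus))" unfolding mpred_def by auto
  have "h Zi \<noteq> h Zj" using assms(1) w(1,3) by (auto simp: inj_on_def)
  thus ?thesis unfolding mpred_def using w by (intro exI[of _ "h Zi"] exI[of _ "h Zj"] exI[of _ "g Zk"]) simp
qed

lemma lab_pair: "{a,b} = {xplus,xminus} \<longleftrightarrow> (a = xplus \<and> b = xminus) \<or> (a = xminus \<and> b = xplus)"
  by (cases a; cases b) auto

lemma lab_neq: "a \<noteq> xplus \<longleftrightarrow> a = xminus" "a \<noteq> xminus \<longleftrightarrow> a = xplus"
  by (cases a; simp)+

lemma dpred_img: assumes "inj_on h S" "inj_on g S2"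
  shows "dpred (h ` S) (g ` S2) l l2 = dpred S S2 (l \<circ> h) (l2 \<circ> g)"
proof
  assume "dpred S S2 (l \<circ> h) (l2 \<circ> g)" thus "dpred (h ` S) (g ` S2) l l2" using dpred_img1 assms(2) by blast
next
  assume a: "dpred (h ` S) (g ` S2) l l2"
  let ?h = "the_inv_into S h" and ?g = "the_inv_into S2 g"
  have "dpred (h ` S) (g ` S2) ((l \<circ> h) \<circ> ?h) ((l2 \<circ> g) \<circ> ?g)"
    using dpred_agree[of "h ` S" l "(l \<circ> h) \<circ> ?h" "g ` S2" l2 "(l2 \<circ> g) \<circ> ?g"] a
    by (simp add: f_the_inv_into_f assms)
  hence "dpred (?h ` h ` S) (?g ` g ` S2) (l \<circ> h) (l2 \<circ> g)"
    using dpred_img1 inj_on_the_inv_into[OF assms(2)] by blast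
  thus "dpred S S2 (l \<circ> h) (l2 \<circ> g)" by (simp add: the_inv_into_onto assms)
qed

lemma mpred_img: assumes "inj_on h S" "inj_on g S2"
  shows "mpred (h ` S) (g ` S2) l l2 = mpred S S2 (l \<circ> h) (l2 \<circ> g)"
proof
  assume "mpred S S2 (l \<circ> h) (l2 \<circ> g)" thus "mpred (h ` S) (g ` S2) l l2" using mpred_img1 assms(1) by blast
next
  assume a: "mpred (h ` S) (g ` S2) l l2"
  let ?h = "the_inv_into S h" and ?g = "the_inv_into S2 g"
  have "mpred (h ` S) (g ` S2) ((l \<circ> h) \<circ> ?h) ((l2 \<circ> g) \<circ> ?g)"
    using mpred_agree[of "h ` S" l "(l \<circ> h) \<circ> ?h" "g ` S2" l2 "(l2 \<circ> g) \<circ> ?g"] a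
    by (simp add: f_the_inv_into_f assms)
  hence "mpred (?h ` h ` S) (?g ` g ` S2) (l \<circ> h) (l2 \<circ> g)"
    using mpred_img1 inj_on_the_inv_into[OF assms(1)] by blast
  thus "mpred S S2 (l \<circ> h) (l2 \<circ> g)" by (simp add: the_inv_into_onto assms)
qed

lemma dpred_flip1:
  assumes "\<forall>C\<in>S. C \<noteq> M0 \<longrightarrow> la C = lb C" "\<forall>C\<in>S2. C \<noteq> M2 \<longrightarrow> la2 C = lb2 C"
    "M0 \<in> S \<longleftrightarrow> M2 \<in> S2" "la M0 \<noteq> lb M0" "la2 M2 \<noteq> lb2 M2" "la M0 = la2 M2"
    "dpred S S2 la la2"
  shows "dpred S S2 lb lb2"
proof (cases "M0 \<in> S")
  case False
  hence "M2 \<notin> S2" using assms(3) by simp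
  hence "\<forall>C\<in>S2. la2 C = lb2 C" using assms(2) by metis
  moreover have "\<forall>C\<in>S. la C = lb C" using assms(1) False by metis
  ultimately show ?thesis using dpred_agree1[of S la lb S2 la2 lb2] assms(7) by blast
next
  case True
  hence M2: "M2 \<in> S2" using assms(3) by simp
  from assms(7) obtain Zi Zj Zk where w: "S = {Zi}" "S2 = {Zj,Zk}" "Zj \<noteq> Zk"
    "((la Zi = xminus \<and> la2 Zj = xminus \<and> la2 Zk = xminus) \<or>
         (la Zi = xplus \<and> {la2 Zj, la2 Zk} = {xplus, xminus}))" unfolding dpred_def by blast
  have Zi: "Zi = M0" using True w(1) by simp
  have lbi: "lb Zi \<noteq> la Zi" using assms(4) Zi by simp
  have "(Zj = M2 \<and> lb2 Zk = la2 Zk \<and> lb2 Zj \<noteq> la2 Zj \<and> la Zi = la2 Zj) \<or>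
        (Zk = M2 \<and> lb2 Zj = la2 Zj \<and> lb2 Zk \<noteq> la2 Zk \<and> la Zi = la2 Zk)"
    using assms(2,5,6) w(2,3) M2 Zi by auto
  hence "(lb Zi = xminus \<and> lb2 Zj = xminus \<and> lb2 Zk = xminus) \<or>
         (lb Zi = xplus \<and> {lb2 Zj, lb2 Zk} = {xplus, xminus})"
    using w(4) lbi
    by (cases "la Zi"; cases "lb Zi"; cases "la2 Zj"; cases "la2 Zk"; cases "lb2 Zj"; cases "lb2 Zk")
       (simp_all add: lab_pair)
  thus ?thesis unfolding dpred_def using w(1-3) by blast
qed

lemma mpred_flip1:
  assumes "\<forall>C\<in>S. C \<noteq> M0 \<longrightarrow> la C = lb C" "\<forall>C\<in>S2. C \<noteq> M2 \<longrightarrow> la2 C = lb2 C"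
    "M0 \<in> S \<longleftrightarrow> M2 \<in> S2" "la M0 \<noteq> lb M0" "la2 M2 \<noteq> lb2 M2" "la M0 = la2 M2"
    "mpred S S2 la la2"
  shows "mpred S S2 lb lb2"
proof (cases "M0 \<in> S")
  case False
  hence "M2 \<notin> S2" using assms(3) by simp
  hence "\<forall>C\<in>S2. la2 C = lb2 C" using assms(2) by metis
  moreover have "\<forall>C\<in>S. la C = lb C" using assms(1) False by metis
  ultimately show ?thesis using mpred_agree1[of S la lb S2 la2 lb2] assms(7) by blast
next
  case True
  hence M2: "M2 \<in> S2" using assms(3) by simp
  from assms(7) obtain Zi Zj Zk where w: "S = {Zi,Zj}" "S2 = {Zk}" "Zi \<noteq> Zj"
    "((la Zi = xplus \<and> la Zj = xplus \<and> la2 Zk = xplus) \<or>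
         ({la Zi, la Zj} = {xplus, xminus} \<and> la2 Zk = xminus))" unfolding mpred_def by blast
  have Zk: "Zk = M2" using M2 w(2) by simp
  have lbk: "lb2 Zk \<noteq> la2 Zk" using assms(5) Zk by simp
  have "(Zi = M0 \<and> lb Zj = la Zj \<and> lb Zi \<noteq> la Zi \<and> la Zi = la2 Zk) \<or>
        (Zj = M0 \<and> lb Zi = la Zi \<and> lb Zj \<noteq> la Zj \<and> la Zj = la2 Zk)"
  proof (cases "Zi = M0")
    case True thus ?thesis using assms(1,4,6) w(1,3) Zk by simp
  next
    case False
    hence "Zj = M0" using \<open>M0 \<in> S\<close> w(1) by blast
    thus ?thesis using assms(1,4,6) w(1,3) Zk False by simp
  qed
  hence "(lb Zi = xplus \<and> lb Zj = xplus \<and> lb2 Zk = xplus) \<or>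
         ({lb Zi, lb Zj} = {xplus, xminus} \<and> lb2 Zk = xminus)"
    using w(4) lbk
    by (cases "la Zi"; cases "lb Zi"; cases "la Zj"; cases "lb Zj"; cases "la2 Zk"; cases "lb2 Zk")
       (simp_all add: lab_pair)
  thus ?thesis unfolding mpred_def using w(1-3) by blast
qed

lemma dpred_flip:
  assumes "\<forall>C\<in>S. C \<noteq> M0 \<longrightarrow> la C = lb C" "\<forall>C\<in>S2. C \<noteq> M2 \<longrightarrow> la2 C = lb2 C"
    "M0 \<in> S \<longleftrightarrow> M2 \<in> S2" "la M0 \<noteq> lb M0" "la2 M2 \<noteq> lb2 M2" "la M0 = la2 M2"
  shows "dpred S S2 la la2 = dpred S S2 lb lb2"
proof
  assume "dpred S S2 la la2" thus "dpred S S2 lb lb2" by (rule dpred_flip1[OF assms])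
next
  have a1: "\<forall>C\<in>S. C \<noteq> M0 \<longrightarrow> lb C = la C" using assms(1) by simp
  have a2: "\<forall>C\<in>S2. C \<noteq> M2 \<longrightarrow> lb2 C = la2 C" using assms(2) by simp
  have a4: "lb M0 \<noteq> la M0" using assms(4) by simp
  have a5: "lb2 M2 \<noteq> la2 M2" using assms(5) by simp
  have a6: "lb M0 = lb2 M2" using assms(4,5,6) by (cases "la M0"; cases "lb M0"; cases "lb2 M2") auto
  assume "dpred S S2 lb lb2" thus "dpred S S2 la la2" by (rule dpred_flip1[OF a1 a2 assms(3) a4 a5 a6])
qed

lemma mpred_flip:
  assumes "\<forall>C\<in>S. C \<noteq> M0 \<longrightarrow> la C = lb C" "\<forall>C\<in>S2. C \<noteq> M2 \<longrightarrow> la2 C = lb2 C"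
    "M0 \<in> S \<longleftrightarrow> M2 \<in> S2" "la M0 \<noteq> lb M0" "la2 M2 \<noteq> lb2 M2" "la M0 = la2 M2"
  shows "mpred S S2 la la2 = mpred S S2 lb lb2"
proof
  assume "mpred S S2 la la2" thus "mpred S S2 lb lb2" by (rule mpred_flip1[OF assms])
next
  have a1: "\<forall>C\<in>S. C \<noteq> M0 \<longrightarrow> lb C = la C" using assms(1) by simp
  have a2: "\<forall>C\<in>S2. C \<noteq> M2 \<longrightarrow> lb2 C = la2 C" using assms(2) by simp
  have a4: "lb M0 \<noteq> la M0" using assms(4) by simp
  have a5: "lb2 M2 \<noteq> la2 M2" using assms(5) by simp
  have a6: "lb M0 = lb2 M2" using assms(4,5,6) by (cases "la M0"; cases "lb M0"; cases "lb2 M2") auto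
  assume "mpred S S2 lb lb2" thus "mpred S S2 la la2" by (rule mpred_flip1[OF a1 a2 assms(3) a4 a5 a6])
qed

lemma step_simp: "step D (B,l) (B2,l2) \<longleftrightarrow> B \<subseteq> arcs D \<and> l \<in> extensional (circles D B) \<and> l2 \<in> extensional (circles D B2) \<and>
     (\<exists>A \<in> arcs D - B. B2 = insert A B \<and>
        (\<forall>C\<in>circles D B. \<not> meets C A \<longrightarrow> C \<in> circles D B2 \<and> l2 C = l C) \<and>
        (delta_rel D B l B2 l2 A \<or> m_rel D B l B2 l2 A))"
  unfolding step_def by simp

lemma step_fixed: assumes "B \<subseteq> arcs D" "A \<in> arcs D" "A \<notin> B"
  shows "step D (B,l) (insert A B, l2) \<longleftrightarrow> l \<in> extensional (circles D B) \<and> l2 \<in> extensional (circles D (insert A B))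
     \<and> (\<forall>C\<in>circles D B. \<not> meets C A \<longrightarrow> l2 C = l C)
     \<and> (delta_rel D B l (insert A B) l2 A \<or> m_rel D B l (insert A B) l2 A)"
proof
  assume "step D (B,l) (insert A B, l2)"
  then obtain A' where A': "A' \<in> arcs D - B" "insert A B = insert A' B"
    "\<forall>C\<in>circles D B. \<not> meets C A' \<longrightarrow> C \<in> circles D (insert A B) \<and> l2 C = l C"
    "delta_rel D B l (insert A B) l2 A' \<or> m_rel D B l (insert A B) l2 A'"
    and e: "l \<in> extensional (circles D B)" "l2 \<in> extensional (circles D (insert A B))"
    unfolding step_simp by blast
  have "A' = A" using A'(1,2) assms(3) by blast
  thus "l \<in> extensional (circles D B) \<and> l2 \<in> extensional (circles D (insert A B))
     \<and> (\<forall>C\<in>circles D B. \<not> meets C A \<longrightarrow> l2 C = l C)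
     \<and> (delta_rel D B l (insert A B) l2 A \<or> m_rel D B l (insert A B) l2 A)" using A' e by blast
next
  assume a: "l \<in> extensional (circles D B) \<and> l2 \<in> extensional (circles D (insert A B))
     \<and> (\<forall>C\<in>circles D B. \<not> meets C A \<longrightarrow> l2 C = l C)
     \<and> (delta_rel D B l (insert A B) l2 A \<or> m_rel D B l (insert A B) l2 A)"
  have "\<forall>C\<in>circles D B. \<not> meets C A \<longrightarrow> C \<in> circles D (insert A B) \<and> l2 C = l C"
    using a G1a by blast
  thus "step D (B,l) (insert A B, l2)" unfolding step_simp using a assms by blast
qed

lemma absorb: assumes "step D (B,l) (B2,l2)" "n0 \<in> pts D \<times> UNIV"
  "l (ccomp (sedges D B) n0) = xminus" shows "l2 (ccomp (sedges D B2) n0) = xminus"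
proof -
  from assms(1) obtain A where A: "A \<in> arcs D - B" "B2 = insert A B"
    "\<forall>C\<in>circles D B. \<not> meets C A \<longrightarrow> C \<in> circles D B2 \<and> l2 C = l C"
    "delta_rel D B l B2 l2 A \<or> m_rel D B l B2 l2 A"
    unfolding step_simp by blast
  define C0 where "C0 = ccomp (sedges D B) n0"
  define C2 where "C2 = ccomp (sedges D B2) n0"
  have C0: "C0 \<in> circles D B" unfolding C0_def using assms(2) by (rule comp_in_circles)
  have C2: "C2 \<in> circles D B2" unfolding C2_def using assms(2) by (rule comp_in_circles)
  have l0: "l C0 = xminus" using assms(3) C0_def by simp
  show ?thesis
  proof (cases "meets C0 A")
    case False
    hence "C0 \<in> circles D B2" "l2 C0 = l C0" using A(3) C0 by auto
    moreover have "n0 \<in> C0" unfolding C0_def by simp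
    ultimately have "C0 = C2" unfolding C2_def using circle_node by metis
    thus ?thesis using \<open>l2 C0 = l C0\<close> l0 C2_def by simp
  next
    case True
    have m2: "meets C2 A"
    proof (rule ccontr)
      assume "\<not> meets C2 A"
      hence "C2 \<in> circles D B" using C2 A(2) G1b by blast
      moreover have "n0 \<in> C2" unfolding C2_def by simp
      ultimately have "C2 = C0" unfolding C0_def using circle_node by metis
      thus False using True \<open>\<not> meets C2 A\<close> by simp
    qed
    have S0: "C0 \<in> {C\<in>circles D B. meets C A}" using C0 True by simp
    have S2: "C2 \<in> {C\<in>circles D B2. meets C A}" using C2 m2 by simp
    from A(4) show ?thesis
    proof
      assume "delta_rel D B l B2 l2 A"
      hence "dpred {C\<in>circles D B. meets C A} {C\<in>circles D B2. meets C A} l l2" by (simp add: delta_rel_alt)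
      then obtain Zi Zj Zk where w: "{C\<in>circles D B. meets C A} = {Zi}" "{C\<in>circles D B2. meets C A} = {Zj,Zk}"
        "(l Zi = xminus \<and> l2 Zj = xminus \<and> l2 Zk = xminus) \<or>
         (l Zi = xplus \<and> {l2 Zj, l2 Zk} = {xplus, xminus})" by (rule dpredE)
      have "Zi = C0" using S0 w(1) by simp
      hence "l2 Zj = xminus \<and> l2 Zk = xminus" using w(3) l0 by auto
      moreover have "C2 = Zj \<or> C2 = Zk" using S2 w(2) by simp
      ultimately show ?thesis unfolding C2_def[symmetric] by auto
    next
      assume "m_rel D B l B2 l2 A"
      hence "mpred {C\<in>circles D B. meets C A} {C\<in>circles D B2. meets C A} l l2" by (simp add: m_rel_alt)
      then obtain Zi Zj Zk where w: "{C\<in>circles D B. meets C A} = {Zi,Zj}" "{C\<in>circles D B2. meets C A} = {Zk}"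
        "(l Zi = xplus \<and> l Zj = xplus \<and> l2 Zk = xplus) \<or>
         ({l Zi, l Zj} = {xplus, xminus} \<and> l2 Zk = xminus)" by (rule mpredE)
      have "Zi = C0 \<or> Zj = C0" using S0 w(1) by auto
      hence "l2 Zk = xminus" using w(3) l0 by auto
      moreover have "C2 = Zk" using S2 w(2) by simp
      ultimately show ?thesis unfolding C2_def[symmetric] by auto
    qed
  qed
qed




lemma sedges_pts: assumes "wf_conf D" "B \<subseteq> arcs D" "(a,b) \<in> sedges D B"
  shows "a \<in> pts D \<times> UNIV \<and> b \<in> pts D \<times> UNIV"
proof -
  have nx: "r \<in> pts D \<Longrightarrow> nxt D r \<in> pts D" for r using assms(1) unfolding wf_conf_def bij_betw_def by blast
  have ar: "{u,v} \<in> B \<Longrightarrow> u \<in> pts D \<and> v \<in> pts D" for u v using assms(1,2) unfolding wf_conf_def by blast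
  show ?thesis using assms(3) nx ar unfolding sedges_def by auto
qed

lemma circ_edge: "r \<in> pts D \<Longrightarrow> ((r,True),(nxt D r,False)) \<in> sedges D B"
  unfolding sedges_def by blast

lemma loc_edge: "r \<in> pts D \<Longrightarrow> r \<notin> \<Union>B \<Longrightarrow> ((r,False),(r,True)) \<in> sedges D B"
  unfolding sedges_def by blast

lemma arc_edges: "{u,v} \<in> B \<Longrightarrow> u \<noteq> v \<Longrightarrow>
   (lft D u = lft D v \<and> ((u,False),(v,False)) \<in> sedges D B \<and> ((u,True),(v,True)) \<in> sedges D B) \<or>
   (lft D u \<noteq> lft D v \<and> ((u,False),(v,True)) \<in> sedges D B \<and> ((v,False),(u,True)) \<in> sedges D B)"
proof -
  assume a: "{u,v} \<in> B" "u \<noteq> v"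
  have b: "{v,u} \<in> B" using a(1) by (simp add: insert_commute)
  show ?thesis
  proof (cases "lft D u = lft D v")
    case True thus ?thesis using a unfolding sedges_def by blast
  next
    case False
    hence "lft D v \<noteq> lft D u" by simp
    thus ?thesis using a b False unfolding sedges_def by blast
  qed
qed

lemma period: assumes "finite S" "inj_on f S" "f ` S \<subseteq> S" "x \<in> S" shows "\<exists>n>0. (f^^n) x = x"
proof -
  have it: "(f^^k) z \<in> S" if "z \<in> S" for k z using that assms(3) by (induction k) auto
  have canc: "(f^^i) u = (f^^i) v \<Longrightarrow> u \<in> S \<Longrightarrow> v \<in> S \<Longrightarrow> u = v" for i u v
  proof (induction i)
    case 0 thus ?case by simp
  next
    case (Suc i)
    have "f ((f^^i) u) = f ((f^^i) v)" using Suc.prems(1) by simp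
    hence "(f^^i) u = (f^^i) v" using assms(2) it Suc.prems(2,3) unfolding inj_on_def by blast
    thus ?case using Suc by blast
  qed
  let ?g = "\<lambda>k. (f^^k) x"
  have "\<not> inj_on ?g {..card S}"
  proof
    assume "inj_on ?g {..card S}"
    moreover have "?g ` {..card S} \<subseteq> S" using it assms(4) by auto
    ultimately have "card {..card S} \<le> card S" using card_inj_on_le assms(1) by blast
    thus False by simp
  qed
  then obtain i j where ij: "i \<noteq> j" "?g i = ?g j" unfolding inj_on_def by blast
  have "\<exists>i j. i < j \<and> ?g i = ?g j" using ij by (metis linorder_neqE_nat)
  then obtain i j where ij: "i < j" "?g i = ?g j" by blast
  have "(f^^i) ((f^^(j-i)) x) = (f^^j) x" using ij(1)
    by (metis funpow_add le_add_diff_inverse less_imp_le comp_apply)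
  hence "(f^^i) ((f^^(j-i)) x) = (f^^i) x" using ij(2) by simp
  hence "(f^^(j-i)) x = x" using canc it assms(4) by blast
  thus ?thesis using ij(1) by (intro exI[of _ "j-i"]) simp
qed

lemma sedges_diff2a: assumes "Ba \<subseteq> Bb" "e \<in> sedges D Bb" "e \<notin> sedges D Ba"
  shows "e \<in> (\<Union>(Bb - Ba) \<times> UNIV) \<times> (\<Union>(Bb - Ba) \<times> UNIV)"
proof -
  have "\<exists>u v. {u,v} \<in> Bb - Ba \<and> (e = ((u,False),(v,False)) \<or> e = ((u,True),(v,True)) \<or> e = ((u,False),(v,True)))"
    using assms unfolding sedges_def by blast
  thus ?thesis by blast
qed

lemma sedges_diff2b: assumes "Ba \<subseteq> Bb" "e \<in> sedges D Ba" "e \<notin> sedges D Bb"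
  shows "e \<in> (\<Union>(Bb - Ba) \<times> UNIV) \<times> (\<Union>(Bb - Ba) \<times> UNIV)"
proof -
  have "\<exists>r. r \<in> \<Union>Bb \<and> r \<notin> \<Union>Ba \<and> e = ((r,False),(r,True))"
    using assms unfolding sedges_def by blast
  then obtain r where "r \<in> \<Union>Bb" "r \<notin> \<Union>Ba" "e = ((r,False),(r,True))" by blast
  thus ?thesis by blast
qed

lemma sedges_diff2: "Ba \<subseteq> Bb \<Longrightarrow> (e \<in> sedges D Ba \<and> e \<notin> sedges D Bb) \<or> (e \<in> sedges D Bb \<and> e \<notin> sedges D Ba)
   \<Longrightarrow> e \<in> (\<Union>(Bb - Ba) \<times> UNIV) \<times> (\<Union>(Bb - Ba) \<times> UNIV)"
  using sedges_diff2a sedges_diff2b by blast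

lemma edge_R: "(a,b) \<in> E \<Longrightarrow> (a,b) \<in> (E \<union> E\<inverse>)\<^sup>*" "(a,b) \<in> E \<Longrightarrow> (b,a) \<in> (E \<union> E\<inverse>)\<^sup>*"
  by auto

lemma sedges_forms: "e \<in> sedges D B \<Longrightarrow> Ba \<subseteq> Bb \<Longrightarrow> B = Ba \<Longrightarrow>
   (\<exists>r. r \<in> pts D \<and> r \<notin> \<Union>B \<and> e = ((r,False),(r,True))) \<or> e \<in> sedges D Bb"
  unfolding sedges_def by blast

lemma sedges0_forms: "e \<in> sedges D {} \<Longrightarrow>
   (\<exists>r. r \<in> pts D \<and> (e = ((r,False),(r,True)) \<or> e = ((r,True),(nxt D r,False))))"
  unfolding sedges_def by blast

locale leafset =
  fixes D :: "'p rconf" and x y :: "'p node set \<Rightarrow> lab"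
    and Z1 Z1s Z2s :: "'p node set" and A1 :: "'p set" and p q :: 'p
  assumes dec: "decorated D x y"
    and leaf: "leaf D Z1"
    and A1: "A1 \<in> arcs D" and A1pq: "A1 = {p, q}" and pZ1: "on_circle p Z1"
    and Z1s: "Z1s \<in> circles D (arcs D)" and dual: "dual_arc_circle A1 Z1s"
    and Z2s: "Z2s \<in> circles D (arcs D - {A1})" and Z2s1: "Z2s \<noteq> Z1" and Z2s2: "\<exists>r\<in>A1. on_circle r Z2s"
begin

definition "D' = delete_circ_arc D Z1 A1"
definition "P1 = {r. (r,True) \<in> Z1}"
definition "A' = arcs D - {A1}"
definition "c = y Z1"
definition "cq B = ccomp (sedges D' B) (q,True)"

lemma wf: "wf_conf D" using dec unfolding decorated_def by blast
lemma fin: "finite (pts D)" using wf unfolding wf_conf_def by blast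
lemma bij: "bij_betw (nxt D) (pts D) (pts D)" using wf unfolding wf_conf_def by blast
lemma arcs_card: "A \<in> arcs D \<Longrightarrow> card A = 2" using wf unfolding wf_conf_def by blast
lemma arcs_sub: "A \<in> arcs D \<Longrightarrow> A \<subseteq> pts D" using wf unfolding wf_conf_def by blast
lemma arcs_disj: "A \<in> arcs D \<Longrightarrow> A'' \<in> arcs D \<Longrightarrow> A \<noteq> A'' \<Longrightarrow> A \<inter> A'' = {}"
  using wf unfolding wf_conf_def by blast
lemma nxt_pts: "r \<in> pts D \<Longrightarrow> nxt D r \<in> pts D" using bij unfolding bij_betw_def by blast

lemma D'_simps[simp]: "pts D' = {r\<in>pts D. r \<notin> P1}" "nxt D' = nxt D" "lft D' = lft D" "arcs D' = A'"
  unfolding D'_def delete_circ_arc_def P1_def A'_def on_circle_def by auto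

lemma pq: "p \<noteq> q" using arcs_card[OF A1] A1pq by (cases "p = q") auto
lemma p_pts: "p \<in> pts D" and q_pts: "q \<in> pts D" using arcs_sub[OF A1] A1pq by auto
lemma pP1: "p \<in> P1" using pZ1 unfolding on_circle_def P1_def by simp

lemma Z1_circ: "Z1 \<in> circles D {}" using leaf unfolding leaf_def by blast

lemma Z1_sub: "Z1 \<subseteq> pts D \<times> UNIV"
proof -
  obtain n where n: "n \<in> pts D \<times> UNIV" "Z1 = ccomp (sedges D {}) n" using Z1_circ unfolding circles_comp by blast
  have "\<forall>(a,b)\<in>sedges D {}. a \<in> pts D \<times> UNIV \<longleftrightarrow> b \<in> pts D \<times> UNIV"
    using sedges_pts[OF wf, of "{}"] by blast
  thus ?thesis using comp_closed_sub n by metis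
qed

lemma Z1_node: "(r,b) \<in> Z1 \<longleftrightarrow> r \<in> P1"
proof
  assume a: "(r,b) \<in> Z1"
  hence r: "r \<in> pts D" using Z1_sub by blast
  have "Z1 = ccomp (sedges D {}) (r,b)" using circle_node[OF Z1_circ a] .
  moreover have "((r,False),(r,True)) \<in> sedges D {}" using loc_edge[OF r] by simp
  ultimately show "r \<in> P1" unfolding P1_def using comp_edge[of "(r,False)" "(r,True)" "sedges D {}" "(r,b)"]
    by (cases b) auto
next
  assume "r \<in> P1"
  hence a: "(r,True) \<in> Z1" unfolding P1_def by simp
  hence r: "r \<in> pts D" using Z1_sub by blast
  have "Z1 = ccomp (sedges D {}) (r,True)" using circle_node[OF Z1_circ a] .
  moreover have "((r,False),(r,True)) \<in> sedges D {}" using loc_edge[OF r] by simp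
  ultimately show "(r,b) \<in> Z1" using comp_edge[of "(r,False)" "(r,True)" "sedges D {}" "(r,True)"]
    by (cases b) auto
qed

lemma P1_pts: "P1 \<subseteq> pts D" using Z1_sub Z1_node by blast

lemma P1_nxt: "r \<in> pts D \<Longrightarrow> nxt D r \<in> P1 \<longleftrightarrow> r \<in> P1"
proof -
  assume r: "r \<in> pts D"
  obtain n where n: "Z1 = ccomp (sedges D {}) n" using Z1_circ unfolding circles_comp by blast
  have "((r,True),(nxt D r,False)) \<in> sedges D {}" by (rule circ_edge[OF r])
  hence "(r,True) \<in> Z1 \<longleftrightarrow> (nxt D r,False) \<in> Z1" using n comp_edge by metis
  thus ?thesis using Z1_node by blast
qed

lemma finA: "finite (arcs D)"
proof -
  have "arcs D \<subseteq> Pow (pts D)" using arcs_sub by auto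
  thus ?thesis by (rule finite_subset) (simp add: fin)
qed

lemma leaf_facts: "q \<notin> P1 \<and> (\<forall>A\<in>arcs D. A \<noteq> A1 \<longrightarrow> A \<inter> P1 = {})"
proof -
  define X1 where "X1 = {A\<in>arcs D. card {r\<in>A. on_circle r Z1} = 1}"
  define X2 where "X2 = {A\<in>arcs D. \<forall>r\<in>A. on_circle r Z1}"
  have oc: "on_circle r Z1 \<longleftrightarrow> r \<in> P1" for r unfolding on_circle_def P1_def by simp
  have "card X1 + 2 * card X2 = 1" using leaf unfolding leaf_def deg_def X1_def X2_def by simp
  hence c1: "card X1 = 1" and c2: "card X2 = 0" by presburger+
  have "finite X2" unfolding X2_def using finA by simp
  hence X2: "X2 = {}" using c2 by simp
  have qn: "q \<notin> P1"
  proof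
    assume "q \<in> P1" hence "A1 \<in> X2" unfolding X2_def using A1 A1pq pP1 oc by auto
    thus False using X2 by simp
  qed
  have "{r\<in>A1. on_circle r Z1} = {p}" using A1pq pP1 qn oc by auto
  hence "A1 \<in> X1" unfolding X1_def using A1 by simp
  hence X1: "X1 = {A1}" using c1 by (metis card_1_singletonE singletonD)
  have "A \<inter> P1 = {}" if A: "A \<in> arcs D" "A \<noteq> A1" for A
  proof (rule ccontr)
    assume "A \<inter> P1 \<noteq> {}"
    then obtain r where r: "r \<in> A" "r \<in> P1" by blast
    obtain s where s: "A = {r,s}" "r \<noteq> s" using arcs_card[OF A(1)] r(1)
      by (metis card_2_iff doubleton_eq_iff insertE singletonD)
    show False
    proof (cases "s \<in> P1")
      case True
      hence "A \<in> X2" unfolding X2_def using A(1) s r oc by auto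
      thus False using X2 by simp
    next
      case False
      hence "{r'\<in>A. on_circle r' Z1} = {r}" using s r oc by auto
      hence "A \<in> X1" unfolding X1_def using A(1) by simp
      thus False using X1 A(2) by simp
    qed
  qed
  thus ?thesis using qn by blast
qed

lemma qP1: "q \<notin> P1" using leaf_facts by blast
lemma arcs_P1: "A \<in> arcs D \<Longrightarrow> A \<noteq> A1 \<Longrightarrow> r \<in> A \<Longrightarrow> r \<notin> P1" using leaf_facts by blast

lemma wf': "wf_conf D'"
proof -
  have sub: "nxt D ` (pts D - P1) \<subseteq> pts D - P1" using nxt_pts P1_nxt by blast
  have sub1: "nxt D ` P1 \<subseteq> P1" using nxt_pts P1_nxt P1_pts by blast
  have "nxt D ` (pts D - P1) = nxt D ` pts D - nxt D ` P1"
    using bij P1_pts inj_on_image_set_diff[of "nxt D" "pts D" "pts D" P1] unfolding bij_betw_def by blast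
  also have "\<dots> \<supseteq> pts D - P1" using bij sub1 unfolding bij_betw_def by blast
  finally have "nxt D ` (pts D - P1) = pts D - P1" using sub by blast
  moreover have "inj_on (nxt D) (pts D - P1)" using bij unfolding bij_betw_def by (meson Diff_subset inj_on_subset)
  ultimately have b: "bij_betw (nxt D) (pts D - P1) (pts D - P1)" unfolding bij_betw_def by blast
  have pD: "pts D' = pts D - P1" by auto
  have a1: "\<forall>A\<in>arcs D'. card A = 2 \<and> A \<subseteq> pts D'"
  proof
    fix A assume "A \<in> arcs D'"
    hence A: "A \<in> arcs D" "A \<noteq> A1" unfolding D'_simps A'_def by auto
    show "card A = 2 \<and> A \<subseteq> pts D'" unfolding pD using arcs_card[OF A(1)] arcs_sub[OF A(1)] arcs_P1[OF A] by blast
  qed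
  have a2: "\<forall>A\<in>arcs D'. \<forall>A''\<in>arcs D'. A \<noteq> A'' \<longrightarrow> A \<inter> A'' = {}"
    unfolding D'_simps A'_def using arcs_disj by blast
  have b': "bij_betw (nxt D') (pts D') (pts D')" using b unfolding pD by simp
  have f': "finite (pts D')" using fin pD by simp
  show ?thesis unfolding wf_conf_def by (intro conjI f' b' a1 a2)
qed

lemma B_P1: "B \<subseteq> A' \<Longrightarrow> r \<in> \<Union>B \<Longrightarrow> r \<notin> P1" using arcs_P1 unfolding A'_def by blast
lemma B_A1: "B \<subseteq> A' \<Longrightarrow> r \<in> \<Union>B \<Longrightarrow> r \<notin> A1" using arcs_disj A1 unfolding A'_def by blast

lemma pT_Z1: "(p,True) \<in> Z1" using pP1 Z1_node by simp
lemma Z1_comp0: "Z1 = ccomp (sedges D {}) (p,True)" using circle_node[OF Z1_circ pT_Z1] .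

lemma Z1_compB: assumes "B \<subseteq> A'" shows "ccomp (sedges D B) (p,True) = Z1"
proof -
  have "\<forall>e. (e \<in> sedges D {} \<and> e \<notin> sedges D B) \<or> (e \<in> sedges D B \<and> e \<notin> sedges D {}) \<longrightarrow>
      e \<in> (\<Union>B \<times> UNIV) \<times> (\<Union>B \<times> UNIV)" using sedges_diff2[where Ba="{}" and Bb=B and D=D] by simp
  moreover have "ccomp (sedges D {}) (p,True) \<inter> (\<Union>B \<times> UNIV) = {}"
    unfolding Z1_comp0[symmetric]
  proof (rule ccontr)
    assume "Z1 \<inter> (\<Union>B \<times> UNIV) \<noteq> {}"
    then obtain r b where "(r,b) \<in> Z1" "r \<in> \<Union>B" by blast
    thus False using Z1_node B_P1[OF assms] by blast
  qed
  ultimately have "ccomp (sedges D B) (p,True) = ccomp (sedges D {}) (p,True)" by (rule comp_outside)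
  thus ?thesis by (simp only: Z1_comp0[symmetric])
qed

lemma Z1_comp_any: "B \<subseteq> A' \<Longrightarrow> n \<in> Z1 \<Longrightarrow> ccomp (sedges D B) n = Z1"
  using Z1_compB comp_eq_mem by metis

lemma sedges_D'_sub: "sedges D' B \<subseteq> sedges D B"
  unfolding sedges_def by auto

lemma sedges_D'_diff: assumes "e \<in> sedges D B" "e \<notin> sedges D' B" shows "e \<in> Z1 \<times> Z1"
proof -
  have "\<exists>r. r \<in> pts D \<and> r \<in> P1 \<and> (e = ((r,True),(nxt D r,False)) \<or> e = ((r,False),(r,True)))"
    using assms unfolding sedges_def by auto
  then obtain r where r: "r \<in> pts D" "r \<in> P1" "e = ((r,True),(nxt D r,False)) \<or> e = ((r,False),(r,True))" by blast
  have "nxt D r \<in> P1" using P1_nxt r by blast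
  thus ?thesis using r Z1_node by auto
qed

lemma comp_D': assumes "B \<subseteq> A'" "n \<notin> Z1" shows "ccomp (sedges D' B) n = ccomp (sedges D B) n"
proof -
  have "\<forall>e. (e \<in> sedges D B \<and> e \<notin> sedges D' B) \<or> (e \<in> sedges D' B \<and> e \<notin> sedges D B) \<longrightarrow> e \<in> Z1 \<times> Z1"
    using sedges_D'_diff sedges_D'_sub by blast
  moreover have "ccomp (sedges D B) n \<inter> Z1 = {}"
  proof (rule ccontr)
    assume "ccomp (sedges D B) n \<inter> Z1 \<noteq> {}"
    hence "ccomp (sedges D B) n = ccomp (sedges D B) (p,True)" using Z1_compB[OF assms(1)] comp_disj by metis
    hence "n \<in> Z1" using Z1_compB[OF assms(1)] comp_self by metis
    thus False using assms(2) by simp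
  qed
  ultimately show ?thesis by (rule comp_outside)
qed

lemma D'_circ_disj: assumes "B \<subseteq> A'" "C \<in> circles D' B" shows "C \<inter> Z1 = {}"
proof -
  obtain n where n: "n \<in> pts D' \<times> UNIV" "C = ccomp (sedges D' B) n" using assms(2) unfolding circles_comp by blast
  have nZ: "n \<notin> Z1" using n(1) Z1_node by auto
  have C: "C = ccomp (sedges D B) n" using comp_D'[OF assms(1) nZ] n(2) by simp
  show ?thesis
  proof (rule ccontr)
    assume "C \<inter> Z1 \<noteq> {}"
    hence "C = Z1" using C Z1_compB[OF assms(1)] comp_disj by metis
    thus False using nZ C comp_self by metis
  qed
qed

lemma Z1_notin: "B \<subseteq> A' \<Longrightarrow> Z1 \<notin> circles D' B" using D'_circ_disj pT_Z1 by blast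

lemma circles_L1: assumes "B \<subseteq> A'" shows "circles D B = insert Z1 (circles D' B)"
proof -
  have pts: "pts D \<times> (UNIV::bool set) = Z1 \<union> pts D' \<times> UNIV" using Z1_sub Z1_node by auto
  have "ccomp (sedges D B) ` Z1 = {Z1}" using Z1_comp_any[OF assms] pT_Z1 by blast
  moreover have "ccomp (sedges D B) ` (pts D' \<times> UNIV) = ccomp (sedges D' B) ` (pts D' \<times> UNIV)"
  proof (rule image_cong[OF refl])
    fix n assume "n \<in> pts D' \<times> (UNIV::bool set)"
    hence "n \<notin> Z1" using Z1_node by auto
    thus "ccomp (sedges D B) n = ccomp (sedges D' B) n" using comp_D'[OF assms] by simp
  qed
  ultimately show ?thesis unfolding circles_comp pts image_Un by simp
qed

lemma q_pts': "q \<in> pts D'" using q_pts qP1 by simp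

lemma compB_Z1_disj: assumes "B \<subseteq> A'" "n \<notin> Z1" shows "ccomp (sedges D B) n \<inter> Z1 = {}"
proof (rule ccontr)
  assume "ccomp (sedges D B) n \<inter> Z1 \<noteq> {}"
  hence "ccomp (sedges D B) n = ccomp (sedges D B) (p,True)" using Z1_compB[OF assms(1)] comp_disj by metis
  hence "n \<in> Z1" using Z1_compB[OF assms(1)] comp_self by metis
  thus False using assms(2) by simp
qed

lemma qT_Z1: "(q,True) \<notin> Z1" and qF_Z1: "(q,False) \<notin> Z1" using qP1 Z1_node by auto

lemma cq_circ: "cq B \<in> circles D' B" unfolding cq_def using q_pts' by (intro comp_in_circles) simp

lemma cq_E: "B \<subseteq> A' \<Longrightarrow> cq B = ccomp (sedges D B) (q,True)"
  unfolding cq_def using comp_D' qT_Z1 by blast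

lemma qT_cq: "(q,True) \<in> cq B" unfolding cq_def by simp

lemma qF_cq: assumes "B \<subseteq> A'" shows "(q,False) \<in> cq B"
proof -
  have "q \<notin> \<Union>B" using B_A1[OF assms] A1pq by blast
  hence "((q,False),(q,True)) \<in> sedges D' B" using q_pts' by (intro loc_edge) auto
  thus ?thesis unfolding cq_def using comp_edge comp_self by metis
qed

lemma cq_Z1: "B \<subseteq> A' \<Longrightarrow> cq B \<inter> Z1 = {}" using D'_circ_disj cq_circ by blast

lemma A1_nodes: assumes "B \<subseteq> A'" "r \<in> A1" shows "(r,b) \<in> cq B \<union> Z1"
proof -
  have "r = p \<or> r = q" using assms(2) A1pq by blast
  thus ?thesis using pP1 Z1_node qT_cq qF_cq[OF assms(1)] by (cases b) auto
qed

lemma L2a: assumes "B \<subseteq> A'" "n \<notin> cq B \<union> Z1"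
  shows "ccomp (sedges D (insert A1 B)) n = ccomp (sedges D' B) n"
proof -
  have d: "\<forall>e. (e \<in> sedges D B \<and> e \<notin> sedges D (insert A1 B)) \<or> (e \<in> sedges D (insert A1 B) \<and> e \<notin> sedges D B)
     \<longrightarrow> e \<in> (cq B \<union> Z1) \<times> (cq B \<union> Z1)"
  proof (intro allI impI)
    fix e assume "(e \<in> sedges D B \<and> e \<notin> sedges D (insert A1 B)) \<or> (e \<in> sedges D (insert A1 B) \<and> e \<notin> sedges D B)"
    hence "e \<in> (A1 \<times> UNIV) \<times> (A1 \<times> UNIV)" by (rule sedges_diff)
    thus "e \<in> (cq B \<union> Z1) \<times> (cq B \<union> Z1)" using A1_nodes[OF assms(1)] by auto
  qed
  have nZ: "n \<notin> Z1" using assms(2) by simp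
  have d1: "ccomp (sedges D B) n \<inter> Z1 = {}" by (rule compB_Z1_disj[OF assms(1) nZ])
  have d2: "ccomp (sedges D B) n \<inter> cq B = {}"
  proof (rule ccontr)
    assume "ccomp (sedges D B) n \<inter> cq B \<noteq> {}"
    hence "ccomp (sedges D B) n = ccomp (sedges D B) (q,True)" using cq_E[OF assms(1)] comp_disj by metis
    hence "n \<in> cq B" using cq_E[OF assms(1)] comp_self by metis
    thus False using assms(2) by simp
  qed
  have "ccomp (sedges D B) n \<inter> (cq B \<union> Z1) = {}" using d1 d2 by blast
  from comp_outside[OF d this] have "ccomp (sedges D (insert A1 B)) n = ccomp (sedges D B) n" .
  also have "\<dots> = ccomp (sedges D' B) n" using comp_D'[OF assms(1) nZ] by simp
  finally show ?thesis .
qed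

definition "n0 = (LEAST n. n > 0 \<and> (nxt D ^^ n) p = p)"

lemma n0: "n0 > 0" "(nxt D ^^ n0) p = p" "0 < k \<Longrightarrow> k < n0 \<Longrightarrow> (nxt D ^^ k) p \<noteq> p"
proof -
  have "inj_on (nxt D) (pts D)" "nxt D ` pts D \<subseteq> pts D" using bij unfolding bij_betw_def by auto
  then obtain N where "N > 0 \<and> (nxt D ^^ N) p = p" using period[OF fin _ _ p_pts] by blast
  hence "n0 > 0 \<and> (nxt D ^^ n0) p = p" unfolding n0_def by (rule LeastI)
  thus "n0 > 0" "(nxt D ^^ n0) p = p" by auto
  show "0 < k \<Longrightarrow> k < n0 \<Longrightarrow> (nxt D ^^ k) p \<noteq> p" unfolding n0_def using not_less_Least by blast
qed

lemma iter_P1: "(nxt D ^^ k) p \<in> P1 \<and> (nxt D ^^ k) p \<in> pts D"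
proof (induction k)
  case 0 thus ?case using pP1 p_pts by simp
next
  case (Suc k) thus ?case using P1_nxt nxt_pts by simp
qed

lemma P1_notin: assumes "B \<subseteq> A'" "r \<in> P1" "r \<noteq> p" shows "r \<notin> \<Union>(insert A1 B)"
  using assms B_P1[OF assms(1)] A1pq qP1 by auto

lemma orbit_conn: assumes "B \<subseteq> A'"
  shows "((p,True),(p,False)) \<in> (sedges D (insert A1 B) \<union> (sedges D (insert A1 B))\<inverse>)\<^sup>*"
proof -
  let ?E = "sedges D (insert A1 B)"
  have "0 < k \<Longrightarrow> k \<le> n0 \<Longrightarrow> ((p,True),((nxt D ^^ k) p, False)) \<in> (?E \<union> ?E\<inverse>)\<^sup>*" for k
  proof (induction k)
    case 0 thus ?case by simp
  next
    case (Suc k)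
    show ?case
    proof (cases "k = 0")
      case True
      have "((p,True),(nxt D p,False)) \<in> ?E" using circ_edge[OF p_pts] .
      thus ?thesis using True by (simp add: edge_R)
    next
      case False
      let ?r = "(nxt D ^^ k) p"
      have IH: "((p,True),(?r, False)) \<in> (?E \<union> ?E\<inverse>)\<^sup>*" using Suc False by simp
      have rp: "?r \<noteq> p" using n0(3)[of k] False Suc.prems by simp
      have rP: "?r \<in> P1" "?r \<in> pts D" using iter_P1 by auto
      have "((?r,False),(?r,True)) \<in> ?E" using loc_edge[OF rP(2)] P1_notin[OF assms rP(1) rp] by blast
      hence 1: "((?r,False),(?r,True)) \<in> (?E \<union> ?E\<inverse>)\<^sup>*" by (rule edge_R)
      have "((?r,True),(nxt D ?r,False)) \<in> ?E" using circ_edge[OF rP(2)] .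
      hence 2: "((?r,True),(nxt D ?r,False)) \<in> (?E \<union> ?E\<inverse>)\<^sup>*" by (rule edge_R)
      have "nxt D ?r = (nxt D ^^ Suc k) p" by simp
      thus ?thesis using IH 1 2 by (metis rtrancl_trans)
    qed
  qed
  from this[of n0] show ?thesis using n0(1,2) by simp
qed

lemma Z1_conn: assumes "B \<subseteq> A'" "n \<in> Z1"
  shows "((p,True),n) \<in> (sedges D (insert A1 B) \<union> (sedges D (insert A1 B))\<inverse>)\<^sup>*"
proof -
  let ?E = "sedges D (insert A1 B)" and ?F = "sedges D {}"
  let ?X = "{((p,False),(p,True))}" and ?K = "{(p,False),(p,True)}"
  have "((p,True),n) \<in> (?F \<union> ?F\<inverse>)\<^sup>*" using assms(2) Z1_comp0 unfolding ccomp_def by blast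
  from last_occ[OF this, of ?X ?K] obtain a where a: "a \<in> ?K" "(a,n) \<in> ((?F - ?X) \<union> (?F - ?X)\<inverse>)\<^sup>*" by auto
  have cl: "\<forall>(u,v)\<in>?F - ?X. u \<in> Z1 \<longleftrightarrow> v \<in> Z1" using comp_closed[of ?F "(p,True)"] Z1_comp0 by auto
  have aZ: "a \<in> Z1" using a(1) pP1 Z1_node by auto
  from restrict_path[OF a(2) cl aZ] have path: "(a,n) \<in> (((?F - ?X) \<inter> Z1 \<times> Z1) \<union> ((?F - ?X) \<inter> Z1 \<times> Z1)\<inverse>)\<^sup>*" by blast
  have sub: "(?F - ?X) \<inter> Z1 \<times> Z1 \<subseteq> ?E"
  proof
    fix e assume e: "e \<in> (?F - ?X) \<inter> Z1 \<times> Z1"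
    then obtain r where r: "r \<in> pts D" "e = ((r,False),(r,True)) \<or> e = ((r,True),(nxt D r,False))"
      using sedges0_forms by blast
    show "e \<in> ?E"
    proof (cases "e = ((r,True),(nxt D r,False))")
      case True thus ?thesis using circ_edge[OF r(1)] by simp
    next
      case False
      hence e': "e = ((r,False),(r,True))" using r(2) by blast
      hence "r \<noteq> p" using e by auto
      moreover have "r \<in> P1" using e e' Z1_node by auto
      ultimately have "r \<notin> \<Union>(insert A1 B)" using P1_notin[OF assms(1)] by blast
      thus ?thesis using loc_edge[OF r(1)] e' by simp
    qed
  qed
  have "((?F - ?X) \<inter> Z1 \<times> Z1) \<union> ((?F - ?X) \<inter> Z1 \<times> Z1)\<inverse> \<subseteq> ?E \<union> ?E\<inverse>" using sub by blast
  hence an: "(a,n) \<in> (?E \<union> ?E\<inverse>)\<^sup>*" using path rtrancl_mono by blast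
  have "((p,True),a) \<in> (?E \<union> ?E\<inverse>)\<^sup>*" using a(1) orbit_conn[OF assms(1)] by auto
  thus ?thesis using an by (rule rtrancl_trans)
qed

lemma cq_conn: assumes "B \<subseteq> A'" "n \<in> cq B"
  shows "((p,True),n) \<in> (sedges D (insert A1 B) \<union> (sedges D (insert A1 B))\<inverse>)\<^sup>*"
proof -
  let ?E = "sedges D (insert A1 B)" and ?F = "sedges D B"
  let ?X = "{((q,False),(q,True))}" and ?K = "{(q,False),(q,True)}"
  have "((q,True),n) \<in> (?F \<union> ?F\<inverse>)\<^sup>*" using assms(2) cq_E[OF assms(1)] unfolding ccomp_def by blast
  from last_occ[OF this, of ?X ?K] obtain a where a: "a \<in> ?K" "(a,n) \<in> ((?F - ?X) \<union> (?F - ?X)\<inverse>)\<^sup>*" by auto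
  have cl: "\<forall>(u,v)\<in>?F - ?X. u \<in> cq B \<longleftrightarrow> v \<in> cq B" using comp_closed[of ?F "(q,True)"] cq_E[OF assms(1)] by auto
  have aZ: "a \<in> cq B" using a(1) qT_cq qF_cq[OF assms(1)] by auto
  from restrict_path[OF a(2) cl aZ] have path: "(a,n) \<in> (((?F - ?X) \<inter> cq B \<times> cq B) \<union> ((?F - ?X) \<inter> cq B \<times> cq B)\<inverse>)\<^sup>*" by blast
  have sub: "(?F - ?X) \<inter> cq B \<times> cq B \<subseteq> ?E"
  proof
    fix e assume e: "e \<in> (?F - ?X) \<inter> cq B \<times> cq B"
    have "(\<exists>r. r \<in> pts D \<and> r \<notin> \<Union>B \<and> e = ((r,False),(r,True))) \<or> e \<in> ?E"
      using e sedges_forms[of e D B B "insert A1 B"] by blast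
    thus "e \<in> ?E"
    proof
      assume "\<exists>r. r \<in> pts D \<and> r \<notin> \<Union>B \<and> e = ((r,False),(r,True))"
      then obtain r where r: "r \<in> pts D" "r \<notin> \<Union>B" "e = ((r,False),(r,True))" by blast
      have "r \<noteq> q" using e r(3) by auto
      moreover have "(r,True) \<in> cq B" using e r(3) by auto
      hence "r \<notin> P1" using cq_Z1[OF assms(1)] Z1_node by blast
      hence "r \<noteq> p" using pP1 by blast
      ultimately have "r \<notin> \<Union>(insert A1 B)" using r(2) A1pq by auto
      thus "e \<in> ?E" using loc_edge[OF r(1)] r(3) by simp
    qed
  qed
  have "((?F - ?X) \<inter> cq B \<times> cq B) \<union> ((?F - ?X) \<inter> cq B \<times> cq B)\<inverse> \<subseteq> ?E \<union> ?E\<inverse>" using sub by blast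
  hence an: "(a,n) \<in> (?E \<union> ?E\<inverse>)\<^sup>*" using path rtrancl_mono by blast
  have pp: "((p,True),(p,False)) \<in> (?E \<union> ?E\<inverse>)\<^sup>*" "((p,False),(p,True)) \<in> (?E \<union> ?E\<inverse>)\<^sup>*"
    using orbit_conn[OF assms(1)] R_sym by auto
  have "{p,q} \<in> insert A1 B" using A1pq by simp
  from arc_edges[OF this pq] 
  have "((p,True),(q,True)) \<in> (?E \<union> ?E\<inverse>)\<^sup>* \<and> ((p,True),(q,False)) \<in> (?E \<union> ?E\<inverse>)\<^sup>*"
  proof
    assume h: "lft D p = lft D q \<and> ((p,False),(q,False)) \<in> ?E \<and> ((p,True),(q,True)) \<in> ?E"
    have "((p,True),(q,True)) \<in> (?E \<union> ?E\<inverse>)\<^sup>*" using h edge_R by blast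
    moreover have "((p,False),(q,False)) \<in> (?E \<union> ?E\<inverse>)\<^sup>*" using h edge_R by blast
    hence "((p,True),(q,False)) \<in> (?E \<union> ?E\<inverse>)\<^sup>*" using pp(1) by (rule rtrancl_trans[rotated])
    ultimately show ?thesis by blast
  next
    assume h: "lft D p \<noteq> lft D q \<and> ((p,False),(q,True)) \<in> ?E \<and> ((q,False),(p,True)) \<in> ?E"
    have "((p,True),(q,False)) \<in> (?E \<union> ?E\<inverse>)\<^sup>*" using h edge_R by blast
    moreover have "((p,False),(q,True)) \<in> (?E \<union> ?E\<inverse>)\<^sup>*" using h edge_R by blast
    hence "((p,True),(q,True)) \<in> (?E \<union> ?E\<inverse>)\<^sup>*" using pp(1) by (rule rtrancl_trans[rotated])
    ultimately show ?thesis by blast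
  qed
  hence "((p,True),a) \<in> (?E \<union> ?E\<inverse>)\<^sup>*" using a(1) by auto
  thus ?thesis using an by (rule rtrancl_trans)
qed

lemma L2b: assumes "B \<subseteq> A'" shows "ccomp (sedges D (insert A1 B)) (p,True) = cq B \<union> Z1"
proof
  let ?E = "sedges D (insert A1 B)" and ?M = "cq B \<union> Z1"
  have cl: "\<forall>(a,b)\<in>?E. a \<in> ?M \<longleftrightarrow> b \<in> ?M"
  proof (clarify)
    fix a b assume ab: "(a,b) \<in> ?E"
    show "a \<in> ?M \<longleftrightarrow> b \<in> ?M"
    proof (cases "(a,b) \<in> sedges D B")
      case True
      have "a \<in> Z1 \<longleftrightarrow> b \<in> Z1" using comp_edge[OF True, of "(p,True)"] Z1_compB[OF assms] by simp
      moreover have "a \<in> cq B \<longleftrightarrow> b \<in> cq B" using comp_edge[OF True, of "(q,True)"] cq_E[OF assms] by simp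
      ultimately show ?thesis by blast
    next
      case False
      hence "(a,b) \<in> (A1 \<times> UNIV) \<times> (A1 \<times> UNIV)" using ab sedges_diff by blast
      thus ?thesis using A1_nodes[OF assms] by auto
    qed
  qed
  have "(p,True) \<in> ?M" using pT_Z1 by simp
  from comp_closed_sub[OF cl this] show "ccomp ?E (p,True) \<subseteq> ?M" .
  show "?M \<subseteq> ccomp ?E (p,True)" using Z1_conn[OF assms] cq_conn[OF assms] unfolding ccomp_def by blast
qed

lemma L2_any: "B \<subseteq> A' \<Longrightarrow> n \<in> cq B \<union> Z1 \<Longrightarrow> ccomp (sedges D (insert A1 B)) n = cq B \<union> Z1"
  using L2b comp_eq_mem by metis

lemma M_notin: "B \<subseteq> A' \<Longrightarrow> cq B \<union> Z1 \<notin> circles D' B"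
  using D'_circ_disj pT_Z1 by blast

lemma M_ne: "B \<subseteq> A' \<Longrightarrow> cq B \<union> Z1 \<noteq> cq B"
  using M_notin cq_circ by metis

lemma L2_circles: assumes "B \<subseteq> A'"
  shows "circles D (insert A1 B) = insert (cq B \<union> Z1) (circles D' B - {cq B})"
proof -
  let ?E = "sedges D (insert A1 B)" and ?M = "cq B \<union> Z1"
  have Msub: "?M \<subseteq> pts D \<times> UNIV"
  proof -
    have "cq B \<subseteq> pts D \<times> UNIV"
    proof -
      have "\<forall>(a,b)\<in>sedges D B. a \<in> pts D \<times> UNIV \<longleftrightarrow> b \<in> pts D \<times> UNIV"
        using sedges_pts[OF wf, of B] assms unfolding A'_def by blast
      thus ?thesis using comp_closed_sub cq_E[OF assms] q_pts by (metis SigmaI UNIV_I)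
    qed
    thus ?thesis using Z1_sub by blast
  qed
  have pts: "pts D \<times> (UNIV::bool set) = ?M \<union> (pts D' \<times> UNIV - cq B)" using Msub Z1_node by auto
  have "ccomp ?E ` ?M = {?M}" using L2_any[OF assms] pT_Z1 by blast
  moreover have "ccomp ?E ` (pts D' \<times> UNIV - cq B) = ccomp (sedges D' B) ` (pts D' \<times> UNIV - cq B)"
  proof (rule image_cong[OF refl])
    fix n assume "n \<in> pts D' \<times> (UNIV::bool set) - cq B"
    hence "n \<notin> ?M" using Z1_node by auto
    thus "ccomp ?E n = ccomp (sedges D' B) n" using L2a[OF assms] by simp
  qed
  moreover have "ccomp (sedges D' B) ` (pts D' \<times> UNIV - cq B) = circles D' B - {cq B}"
  proof
    show "ccomp (sedges D' B) ` (pts D' \<times> UNIV - cq B) \<subseteq> circles D' B - {cq B}"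
    proof
      fix C assume "C \<in> ccomp (sedges D' B) ` (pts D' \<times> UNIV - cq B)"
      then obtain n where n: "n \<in> pts D' \<times> UNIV" "n \<notin> cq B" "C = ccomp (sedges D' B) n" by blast
      have "C \<in> circles D' B" using n(1,3) comp_in_circles by metis
      moreover have "C \<noteq> cq B" using n(2,3) comp_self by metis
      ultimately show "C \<in> circles D' B - {cq B}" by blast
    qed
    show "circles D' B - {cq B} \<subseteq> ccomp (sedges D' B) ` (pts D' \<times> UNIV - cq B)"
    proof
      fix C assume C: "C \<in> circles D' B - {cq B}"
      then obtain n where n: "n \<in> pts D' \<times> UNIV" "C = ccomp (sedges D' B) n" unfolding circles_comp by blast
      have "n \<notin> cq B"
      proof
        assume "n \<in> cq B"
        hence "ccomp (sedges D' B) n = cq B" unfolding cq_def by (rule comp_eq_mem)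
        thus False using C n(2) by simp
      qed
      thus "C \<in> ccomp (sedges D' B) ` (pts D' \<times> UNIV - cq B)" using n by blast
    qed
  qed
  ultimately show ?thesis unfolding circles_comp[of D "insert A1 B"] pts image_Un by simp
qed

lemma cq_D: "B \<subseteq> A' \<Longrightarrow> ccomp (sedges D (insert A1 B)) (q,True) = cq B \<union> Z1"
  using L2_any qT_cq by blast

lemma pcomp_D: "B \<subseteq> A' \<Longrightarrow> ccomp (sedges D (insert A1 B)) (p,True) = cq B \<union> Z1"
  by (rule L2b)

end



lemma fin_circ: "finite (pts D) \<Longrightarrow> finite (circles D B)"
  unfolding circles_comp by simp

lemma mpred_pair: assumes "a \<noteq> b"
  shows "mpred {a,b} {d} l l2 \<longleftrightarrow> ((l a = xplus \<and> l b = xplus \<and> l2 d = xplus) \<or> ({l a, l b} = {xplus, xminus} \<and> l2 d = xminus))"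
proof
  assume "mpred {a,b} {d} l l2"
  then obtain Zi Zj Zk where w: "{a,b} = {Zi,Zj}" "{d} = {Zk}" "Zi \<noteq> Zj"
    "(l Zi = xplus \<and> l Zj = xplus \<and> l2 Zk = xplus) \<or> ({l Zi, l Zj} = {xplus, xminus} \<and> l2 Zk = xminus)"
    by (rule mpredE)
  have k: "Zk = d" using w(2) by simp
  have "(Zi = a \<and> Zj = b) \<or> (Zi = b \<and> Zj = a)" using w(1) assms by (metis doubleton_eq_iff)
  thus "(l a = xplus \<and> l b = xplus \<and> l2 d = xplus) \<or> ({l a, l b} = {xplus, xminus} \<and> l2 d = xminus)"
    using w(4) k by (auto simp: insert_commute)
next
  assume "(l a = xplus \<and> l b = xplus \<and> l2 d = xplus) \<or> ({l a, l b} = {xplus, xminus} \<and> l2 d = xminus)"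
  thus "mpred {a,b} {d} l l2" unfolding mpred_def using assms by blast
qed

context leafset begin

lemma fin_D: "finite (circles D B)" using fin_circ fin by blast
lemma fin_D': "finite (circles D' B)" using fin_circ wf' unfolding wf_conf_def by blast

lemma card_L1: "B \<subseteq> A' \<Longrightarrow> card (circles D B) = card (circles D' B) + 1"
  using circles_L1 Z1_notin fin_D' by simp

lemma card_L2: assumes "B \<subseteq> A'" shows "card (circles D (insert A1 B)) = card (circles D' B)"
proof -
  have "card (circles D (insert A1 B)) = card (circles D' B - {cq B}) + 1"
    using L2_circles[OF assms] M_notin[OF assms] fin_D' by simp
  also have "\<dots> = card (circles D' B)" using cq_circ fin_D'
    by (metis card_Suc_Diff1 Suc_eq_plus1)
  finally show ?thesis .
qed

lemma A'_arcs: "A \<in> A' \<Longrightarrow> A \<in> arcs D \<and> A \<noteq> A1" unfolding A'_def by simp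

lemma meets_Z1: "A \<in> A' \<Longrightarrow> \<not> meets Z1 A"
  unfolding meets_def using A'_arcs arcs_P1 Z1_node by blast

lemma meets_M: "A \<in> A' \<Longrightarrow> meets (C \<union> Z1) A \<longleftrightarrow> meets C A"
  using meets_Z1 unfolding meets_def by blast

lemma meets_Z1_A1: "meets Z1 A1" unfolding meets_def using pT_Z1 A1pq by blast

lemma meets_A1_D': assumes "B \<subseteq> A'" "C \<in> circles D' B" shows "meets C A1 \<longleftrightarrow> C = cq B"
proof
  assume "meets C A1"
  then obtain r s where rs: "r \<in> A1" "(r,s) \<in> C" unfolding meets_def by blast
  have "(r,s) \<notin> Z1" using D'_circ_disj[OF assms] rs(2) by blast
  hence "r = q" using rs(1) A1pq pP1 Z1_node by auto
  hence "(r,s) \<in> cq B" using qT_cq qF_cq[OF assms(1)] by (cases s) auto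
  hence "C = ccomp (sedges D' B) (r,s)" "cq B = ccomp (sedges D' B) (r,s)"
    using circle_node[OF assms(2) rs(2)] circle_node[OF cq_circ] by auto
  thus "C = cq B" by simp
next
  assume "C = cq B" thus "meets C A1" unfolding meets_def using qT_cq A1pq by blast
qed

lemma meets_M_A1: "meets (C \<union> Z1) A1" using meets_Z1_A1 unfolding meets_def by blast

lemma A'_sub: "A' \<subseteq> arcs D" unfolding A'_def by blast

lemma S_L1: "B \<subseteq> A' \<Longrightarrow> A \<in> A' \<Longrightarrow> {C\<in>circles D B. meets C A} = {C\<in>circles D' B. meets C A}"
  using circles_L1 meets_Z1 by auto

lemma T0: assumes B: "B \<subseteq> A'" and A: "A \<in> A'" "A \<notin> B"
  and e: "l \<in> extensional (circles D B)" "l2 \<in> extensional (circles D (insert A B))"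
         "l' \<in> extensional (circles D' B)" "l2' \<in> extensional (circles D' (insert A B))"
  and ag: "\<forall>C\<in>circles D' B. l C = l' C" "\<forall>C\<in>circles D' (insert A B). l2 C = l2' C" "l Z1 = l2 Z1"
  shows "step D (B,l) (insert A B,l2) \<longleftrightarrow> step D' (B,l') (insert A B,l2')"
proof -
  have B2: "insert A B \<subseteq> A'" using B A by blast
  have sD: "step D (B,l) (insert A B,l2) \<longleftrightarrow> (\<forall>C\<in>circles D B. \<not> meets C A \<longrightarrow> l2 C = l C)
     \<and> (delta_rel D B l (insert A B) l2 A \<or> m_rel D B l (insert A B) l2 A)"
    using step_fixed[of B D A l l2] B A A'_sub e by blast
  have sD': "step D' (B,l') (insert A B,l2') \<longleftrightarrow> (\<forall>C\<in>circles D' B. \<not> meets C A \<longrightarrow> l2' C = l' C)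
     \<and> (delta_rel D' B l' (insert A B) l2' A \<or> m_rel D' B l' (insert A B) l2' A)"
    using step_fixed[of B D' A l' l2'] B A e by simp
  have u: "(\<forall>C\<in>circles D B. \<not> meets C A \<longrightarrow> l2 C = l C) \<longleftrightarrow> (\<forall>C\<in>circles D' B. \<not> meets C A \<longrightarrow> l2' C = l' C)"
  proof -
    have "\<forall>C\<in>circles D' B. \<not> meets C A \<longrightarrow> (l2 C = l C \<longleftrightarrow> l2' C = l' C)"
      using G1a ag(1,2) by metis
    thus ?thesis using circles_L1[OF B] ag(3) by auto
  qed
  have S: "{C\<in>circles D B. meets C A} = {C\<in>circles D' B. meets C A}" using S_L1[OF B A(1)] .
  have S2: "{C\<in>circles D (insert A B). meets C A} = {C\<in>circles D' (insert A B). meets C A}" using S_L1[OF B2 A(1)] .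
  have a1: "\<forall>C\<in>{C\<in>circles D' B. meets C A}. l C = l' C" using ag(1) by blast
  have a2: "\<forall>C\<in>{C\<in>circles D' (insert A B). meets C A}. l2 C = l2' C" using ag(2) by blast
  have d: "delta_rel D B l (insert A B) l2 A \<longleftrightarrow> delta_rel D' B l' (insert A B) l2' A"
    unfolding delta_rel_alt S S2 card_L1[OF B] card_L1[OF B2] using dpred_agree[OF a1 a2] by simp
  have m: "m_rel D B l (insert A B) l2 A \<longleftrightarrow> m_rel D' B l' (insert A B) l2' A"
    unfolding m_rel_alt S S2 card_L1[OF B] card_L1[OF B2] using mpred_agree[OF a1 a2] by simp
  show ?thesis using sD sD' u d m by blast
qed

definition corr1 where "corr1 B l l' \<longleftrightarrow> l \<in> extensional (circles D (insert A1 B)) \<and> l' \<in> extensional (circles D' B)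
  \<and> (\<forall>C\<in>circles D' B. C \<noteq> cq B \<longrightarrow> l' C = l C)
  \<and> (if c = xplus then l' (cq B) = l (cq B \<union> Z1) else l' (cq B) = xplus \<and> l (cq B \<union> Z1) = xminus)"

definition hh where "hh B C = (if C = cq B then cq B \<union> Z1 else C)"

lemma hh_img: "B \<subseteq> A' \<Longrightarrow> circles D (insert A1 B) = hh B ` circles D' B"
  unfolding L2_circles hh_def using cq_circ by auto

lemma hh_inj: "B \<subseteq> A' \<Longrightarrow> inj_on (hh B) (circles D' B)"
  unfolding hh_def inj_on_def using M_notin by auto

lemma hh_meets: "A \<in> A' \<Longrightarrow> meets (hh B C) A \<longleftrightarrow> meets C A"
  unfolding hh_def using meets_M by simp

lemma S_img: assumes "B \<subseteq> A'" "A \<in> A'"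
  shows "{C\<in>circles D (insert A1 B). meets C A} = hh B ` {C\<in>circles D' B. meets C A}"
  unfolding hh_img[OF assms(1)] using hh_meets[OF assms(2)] by auto

lemma corr1_lab: "corr1 B l l' \<Longrightarrow> C \<in> circles D' B \<Longrightarrow> c = xplus \<Longrightarrow> l' C = l (hh B C)"
  unfolding corr1_def hh_def by auto

lemma corr1_lab2: "corr1 B l l' \<Longrightarrow> C \<in> circles D' B \<Longrightarrow> C \<noteq> cq B \<Longrightarrow> l' C = l (hh B C)"
  unfolding corr1_def hh_def by auto

lemma corr1_minus: "corr1 B l l' \<Longrightarrow> c \<noteq> xplus \<Longrightarrow> l' (cq B) = xplus \<and> l (hh B (cq B)) = xminus"
  unfolding corr1_def hh_def by auto

lemma cq_keep: assumes "B \<subseteq> A'" "A \<in> A'" "\<not> meets (cq B) A" shows "cq (insert A B) = cq B"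
proof -
  have "cq B \<in> circles D' (insert A B)" using G1a[OF cq_circ assms(3)] .
  thus ?thesis using circle_node[OF _ qT_cq] unfolding cq_def by metis
qed

lemma cq_meets: assumes "B \<subseteq> A'" "A \<in> A'" shows "meets (cq (insert A B)) A \<longleftrightarrow> meets (cq B) A"
proof
  assume m: "meets (cq (insert A B)) A"
  show "meets (cq B) A"
  proof (rule ccontr)
    assume "\<not> meets (cq B) A" thus False using cq_keep[OF assms] m by simp
  qed
next
  assume m: "meets (cq B) A"
  show "meets (cq (insert A B)) A"
  proof (rule ccontr)
    assume nm: "\<not> meets (cq (insert A B)) A"
    have "cq (insert A B) \<in> circles D' B" using G1b[OF cq_circ nm] .
    hence "cq (insert A B) = cq B" using circle_node[OF _ qT_cq] unfolding cq_def by metis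
    thus False using m nm by simp
  qed
qed

lemma T1: assumes B: "B \<subseteq> A'" and A: "A \<in> A'" "A \<notin> B"
  and c1: "corr1 B l l'" and c2: "corr1 (insert A B) l2 l2'"
  shows "step D (insert A1 B,l) (insert A (insert A1 B),l2) \<longleftrightarrow> step D' (B,l') (insert A B,l2')"
proof -
  have B2: "insert A B \<subseteq> A'" using B A by blast
  have AA1: "A \<noteq> A1" "A \<in> arcs D" using A'_arcs[OF A(1)] by auto
  have A1B: "insert A1 B \<subseteq> arcs D" using B A1 A'_sub by blast
  have ins: "insert A (insert A1 B) = insert A1 (insert A B)" by blast
  have e: "l \<in> extensional (circles D (insert A1 B))" "l2 \<in> extensional (circles D (insert A (insert A1 B)))"
         "l' \<in> extensional (circles D' B)" "l2' \<in> extensional (circles D' (insert A B))"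
    using c1 c2 unfolding corr1_def ins by auto
  have sD: "step D (insert A1 B,l) (insert A (insert A1 B),l2) \<longleftrightarrow>
       (\<forall>C\<in>circles D (insert A1 B). \<not> meets C A \<longrightarrow> l2 C = l C)
     \<and> (delta_rel D (insert A1 B) l (insert A (insert A1 B)) l2 A \<or> m_rel D (insert A1 B) l (insert A (insert A1 B)) l2 A)"
    using step_fixed[of "insert A1 B" D A l l2] A1B AA1 A e by blast
  have sD': "step D' (B,l') (insert A B,l2') \<longleftrightarrow> (\<forall>C\<in>circles D' B. \<not> meets C A \<longrightarrow> l2' C = l' C)
     \<and> (delta_rel D' B l' (insert A B) l2' A \<or> m_rel D' B l' (insert A B) l2' A)"
    using step_fixed[of B D' A l' l2'] B A e by simp
  have keepC: "l2' C = l2 (hh (insert A B) C) \<and> l' C = l (hh B C) \<and> hh (insert A B) C = hh B C"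
    if C: "C \<in> circles D' B" "\<not> meets C A" "C \<noteq> cq B" for C
  proof -
    have C2: "C \<in> circles D' (insert A B)" using G1a[OF C(1,2)] .
    have "C \<noteq> cq (insert A B)"
    proof
      assume "C = cq (insert A B)"
      hence "(q,True) \<in> C" using qT_cq by simp
      hence "C = cq B" using circle_node[OF C(1)] circle_node[OF cq_circ qT_cq] unfolding cq_def by metis
      thus False using C(3) by simp
    qed
    thus ?thesis using corr1_lab2[OF c2 C2] corr1_lab2[OF c1 C(1,3)] C(3) unfolding hh_def by simp
  qed
  have keepM: "(l2' (cq B) = l' (cq B)) \<longleftrightarrow> (l2 (hh B (cq B)) = l (hh B (cq B)))" if nm: "\<not> meets (cq B) A"
  proof -
    have eq: "cq (insert A B) = cq B" using cq_keep[OF B A(1) nm] .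
    have cqc: "cq B \<in> circles D' (insert A B)" using eq cq_circ by metis
    show ?thesis
    proof (cases "c = xplus")
      case True
      thus ?thesis using corr1_lab[OF c2 cqc True] corr1_lab[OF c1 cq_circ True] eq unfolding hh_def by simp
    next
      case False
      thus ?thesis using corr1_minus[OF c2 False] corr1_minus[OF c1 False] eq unfolding hh_def by simp
    qed
  qed
  have u: "(\<forall>C\<in>circles D (insert A1 B). \<not> meets C A \<longrightarrow> l2 C = l C) \<longleftrightarrow> (\<forall>C\<in>circles D' B. \<not> meets C A \<longrightarrow> l2' C = l' C)"
  proof -
    have "\<forall>C\<in>circles D' B. \<not> meets C A \<longrightarrow> (l2' C = l' C \<longleftrightarrow> l2 (hh B C) = l (hh B C))"
      using keepC keepM by metis
    thus ?thesis unfolding hh_img[OF B] using hh_meets[OF A(1)] by auto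
  qed
  have S: "{C\<in>circles D (insert A1 B). meets C A} = hh B ` {C\<in>circles D' B. meets C A}" by (rule S_img[OF B A(1)])
  have S2: "{C\<in>circles D (insert A (insert A1 B)). meets C A} = hh (insert A B) ` {C\<in>circles D' (insert A B). meets C A}"
    unfolding ins by (rule S_img[OF B2 A(1)])
  have i1: "inj_on (hh B) {C\<in>circles D' B. meets C A}" using hh_inj[OF B] by (rule inj_on_subset) blast
  have i2: "inj_on (hh (insert A B)) {C\<in>circles D' (insert A B). meets C A}" using hh_inj[OF B2] by (rule inj_on_subset) blast
  have cards: "card (circles D (insert A1 B)) = card (circles D' B)"
              "card (circles D (insert A (insert A1 B))) = card (circles D' (insert A B))"
    using card_L2[OF B] card_L2[OF B2] ins by auto
  let ?S = "{C\<in>circles D' B. meets C A}" and ?S2 = "{C\<in>circles D' (insert A B). meets C A}"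
  have dm: "dpred ?S ?S2 (l \<circ> hh B) (l2 \<circ> hh (insert A B)) = dpred ?S ?S2 l' l2' \<and>
            mpred ?S ?S2 (l \<circ> hh B) (l2 \<circ> hh (insert A B)) = mpred ?S ?S2 l' l2'"
  proof (cases "c = xplus")
    case True
    have a1: "\<forall>C\<in>?S. (l \<circ> hh B) C = l' C" using corr1_lab[OF c1 _ True] by simp
    have a2: "\<forall>C\<in>?S2. (l2 \<circ> hh (insert A B)) C = l2' C" using corr1_lab[OF c2 _ True] by simp
    show ?thesis using dpred_agree[OF a1 a2] mpred_agree[OF a1 a2] by (simp add: o_def)
  next
    case False
    have a1: "\<forall>C\<in>?S. C \<noteq> cq B \<longrightarrow> (l \<circ> hh B) C = l' C" using corr1_lab2[OF c1] by simp
    have a2: "\<forall>C\<in>?S2. C \<noteq> cq (insert A B) \<longrightarrow> (l2 \<circ> hh (insert A B)) C = l2' C" using corr1_lab2[OF c2] by simp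
    have a3: "cq B \<in> ?S \<longleftrightarrow> cq (insert A B) \<in> ?S2" using cq_meets[OF B A(1)] cq_circ by simp
    have a4: "(l \<circ> hh B) (cq B) \<noteq> l' (cq B)" using corr1_minus[OF c1 False] by simp
    have a5: "(l2 \<circ> hh (insert A B)) (cq (insert A B)) \<noteq> l2' (cq (insert A B))" using corr1_minus[OF c2 False] by simp
    have a6: "(l \<circ> hh B) (cq B) = (l2 \<circ> hh (insert A B)) (cq (insert A B))"
      using corr1_minus[OF c1 False] corr1_minus[OF c2 False] by simp
    show ?thesis using dpred_flip[OF a1 a2 a3 a4 a5 a6] mpred_flip[OF a1 a2 a3 a4 a5 a6] by (simp add: o_def)
  qed
  have d: "delta_rel D (insert A1 B) l (insert A (insert A1 B)) l2 A \<longleftrightarrow> delta_rel D' B l' (insert A B) l2' A"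
    unfolding delta_rel_alt S S2 cards dpred_img[OF i1 i2] using dm by simp
  have m: "m_rel D (insert A1 B) l (insert A (insert A1 B)) l2 A \<longleftrightarrow> m_rel D' B l' (insert A B) l2' A"
    unfolding m_rel_alt S S2 cards mpred_img[OF i1 i2] using dm by simp
  show ?thesis using sD sD' u d m by blast
qed

lemma cross: assumes B: "B \<subseteq> A'" and e: "l \<in> extensional (circles D B)" and lz: "l Z1 = c"
  and c2: "corr1 B l2 l2'"
  shows "step D (B,l) (insert A1 B, l2) \<longleftrightarrow> (\<forall>C\<in>circles D' B. l C = l2' C)"
proof -
  let ?M = "cq B \<union> Z1"
  have A1B: "A1 \<notin> B" using B unfolding A'_def by blast
  have Bs: "B \<subseteq> arcs D" using B A'_sub by blast
  have e2: "l2 \<in> extensional (circles D (insert A1 B))" using c2 unfolding corr1_def by blast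
  have sD: "step D (B,l) (insert A1 B,l2) \<longleftrightarrow>
       (\<forall>C\<in>circles D B. \<not> meets C A1 \<longrightarrow> l2 C = l C)
     \<and> (delta_rel D B l (insert A1 B) l2 A1 \<or> m_rel D B l (insert A1 B) l2 A1)"
    using step_fixed[of B D A1 l l2] Bs A1 A1B e e2 by blast
  have ZM: "Z1 \<noteq> cq B" using Z1_notin[OF B] cq_circ by metis
  have S: "{C\<in>circles D B. meets C A1} = {Z1, cq B}"
    unfolding circles_L1[OF B] using meets_Z1_A1 meets_A1_D'[OF B] cq_circ by auto
  have S2: "{C\<in>circles D (insert A1 B). meets C A1} = {?M}"
    unfolding L2_circles[OF B] using meets_M_A1 meets_A1_D'[OF B] by auto
  have nd: "\<not> delta_rel D B l (insert A1 B) l2 A1" unfolding delta_rel_alt using card_L1[OF B] card_L2[OF B] by simp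
  have m: "m_rel D B l (insert A1 B) l2 A1 \<longleftrightarrow>
     ((l Z1 = xplus \<and> l (cq B) = xplus \<and> l2 ?M = xplus) \<or> ({l Z1, l (cq B)} = {xplus, xminus} \<and> l2 ?M = xminus))"
    unfolding m_rel_alt S S2 mpred_pair[OF ZM] using card_L1[OF B] card_L2[OF B] by simp
  have u: "(\<forall>C\<in>circles D B. \<not> meets C A1 \<longrightarrow> l2 C = l C) \<longleftrightarrow> (\<forall>C\<in>circles D' B - {cq B}. l2 C = l C)"
    unfolding circles_L1[OF B] using meets_Z1_A1 meets_A1_D'[OF B] by auto
  have r: "(\<forall>C\<in>circles D' B. l C = l2' C) \<longleftrightarrow> (\<forall>C\<in>circles D' B - {cq B}. l2 C = l C) \<and> l (cq B) = l2' (cq B)"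
    using c2 cq_circ unfolding corr1_def by force
  have mm: "((l Z1 = xplus \<and> l (cq B) = xplus \<and> l2 ?M = xplus) \<or> ({l Z1, l (cq B)} = {xplus, xminus} \<and> l2 ?M = xminus))
     \<longleftrightarrow> l (cq B) = l2' (cq B)"
  proof (cases "c = xplus")
    case True
    hence "l2' (cq B) = l2 ?M" using c2 unfolding corr1_def by simp
    thus ?thesis using lz True by (cases "l (cq B)"; cases "l2 ?M") (auto simp: lab_pair)
  next
    case False
    hence "l2' (cq B) = xplus" "l2 ?M = xminus" "c = xminus" using c2 unfolding corr1_def by (auto simp: lab_neq)
    thus ?thesis using lz by (cases "l (cq B)") (auto simp: lab_pair)
  qed
  show ?thesis using sD nd m u r mm by blast
qed

end



context leafset begin

definition "y' = restrict y (circles D' {})"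
definition "x' = restrict (\<lambda>C. if C = Z2s then (if y Z1 = xplus then x Z1s else xplus) else x C) (circles D' (arcs D'))"

definition dn :: "'p set set \<times> ('p node set \<Rightarrow> lab) \<Rightarrow> ('p set set \<times> ('p node set \<Rightarrow> lab)) \<times> bool" where
  "dn e = (if A1 \<in> fst e then
     ((fst e - {A1}, restrict ((snd e)(cq (fst e - {A1}) :=
         (if c = xplus then snd e (cq (fst e - {A1}) \<union> Z1) else xplus))) (circles D' (fst e - {A1}))), True)
   else ((fst e, restrict (snd e) (circles D' (fst e))), False))"

definition up :: "('p set set \<times> ('p node set \<Rightarrow> lab)) \<times> bool \<Rightarrow> 'p set set \<times> ('p node set \<Rightarrow> lab)" where
  "up t = (if snd t then (insert A1 (fst (fst t)),
       ((snd (fst t))(cq (fst (fst t)) := undefined))(cq (fst (fst t)) \<union> Z1 :=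
          (if c = xplus then snd (fst t) (cq (fst (fst t))) else xminus)))
    else (fst (fst t), (snd (fst t))(Z1 := c)))"

definition invD where "invD e \<longleftrightarrow> fst e \<subseteq> arcs D \<and> snd e \<in> extensional (circles D (fst e))
   \<and> (A1 \<notin> fst e \<longrightarrow> snd e Z1 = c) \<and> (c = xminus \<longrightarrow> snd e (ccomp (sedges D (fst e)) (p,True)) = xminus)"

definition invD' where "invD' e \<longleftrightarrow> fst e \<subseteq> A' \<and> snd e \<in> extensional (circles D' (fst e))
   \<and> (c = xminus \<longrightarrow> snd e (cq (fst e)) = xplus)"

lemma arcsD: "arcs D = insert A1 A'" unfolding A'_def using A1 by blast

lemma step_inv: assumes "invD e1" "step D e1 e2" shows "invD e2"
proof -
  obtain B l where e1: "e1 = (B,l)" by (cases e1)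
  obtain B2 l2 where e2: "e2 = (B2,l2)" by (cases e2)
  from assms(2) obtain A where A: "A \<in> arcs D - B" "B2 = insert A B"
    "\<forall>C\<in>circles D B. \<not> meets C A \<longrightarrow> C \<in> circles D B2 \<and> l2 C = l C"
    and ex: "l2 \<in> extensional (circles D B2)" "B \<subseteq> arcs D"
    unfolding e1 e2 step_simp by blast
  have i1: "A1 \<notin> B2 \<longrightarrow> l2 Z1 = c"
  proof
    assume "A1 \<notin> B2"
    hence "A \<in> A'" "B \<subseteq> A'" "A1 \<notin> B" using A(1,2) ex(2) unfolding A'_def by auto
    hence "Z1 \<in> circles D B" "\<not> meets Z1 A" using circles_L1 meets_Z1 by auto
    hence "l2 Z1 = l Z1" using A(3) by blast
    thus "l2 Z1 = c" using assms(1) \<open>A1 \<notin> B\<close> unfolding invD_def e1 by simp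
  qed
  have i2: "c = xminus \<longrightarrow> l2 (ccomp (sedges D B2) (p,True)) = xminus"
    using absorb[of D B l B2 l2 "(p,True)"] assms unfolding invD_def e1 e2 using p_pts by auto
  show ?thesis unfolding invD_def e2 using i1 i2 ex A(1,2) by auto
qed

lemma bot_inv: "invD ({},y)"
proof -
  have "y \<in> extensional (circles D {})" using dec unfolding decorated_def by blast
  thus ?thesis unfolding invD_def c_def using Z1_comp0 by simp
qed

lemma leq_inv: "leq D a e \<Longrightarrow> invD a \<Longrightarrow> invD e"
  unfolding leq_def by (induction rule: rtranclp_induct) (auto intro: step_inv)

lemma top_leq: "leq D ({},y) (arcs D, x)" using dec unfolding decorated_def by blast

lemma Ppos_inv: "e \<in> Ppos D x y \<Longrightarrow> invD e"
  unfolding Ppos_def using leq_inv bot_inv by blast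

lemma top_Ppos: "(arcs D, x) \<in> Ppos D x y" and bot_Ppos: "({},y) \<in> Ppos D x y"
  unfolding Ppos_def leq_def using top_leq unfolding leq_def by auto

lemma Z2s_cq: "Z2s = cq A'"
proof -
  have "Z2s \<in> circles D' A'" using Z2s Z2s1 circles_L1[of A'] unfolding A'_def by auto
  moreover obtain r where r: "r \<in> A1" "(r,True) \<in> Z2s" using Z2s2 unfolding on_circle_def by blast
  ultimately have "r \<noteq> p" using D'_circ_disj[of A'] pT_Z1 by blast
  hence "r = q" using r(1) A1pq by blast
  thus ?thesis using circle_node[OF \<open>Z2s \<in> circles D' A'\<close>] r(2) unfolding cq_def by blast
qed

lemma Z1s_M: "Z1s = cq A' \<union> Z1"
proof -
  have "(p,True) \<in> Z1s" using dual A1pq unfolding dual_arc_circle_def by blast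
  hence "Z1s = ccomp (sedges D (insert A1 A')) (p,True)" using circle_node Z1s arcsD by metis
  thus ?thesis using pcomp_D[of A'] by simp
qed

lemma x'_cq: "x' (cq A') = (if c = xplus then x (cq A' \<union> Z1) else xplus)"
  unfolding x'_def using cq_circ Z2s_cq Z1s_M c_def by simp

lemma dn_top: "dn (arcs D, x) = ((A', x'), True)"
proof -
  have Aeq: "arcs D - {A1} = A'" unfolding A'_def ..
  define v where "v = (if c = xplus then x (cq A' \<union> Z1) else xplus)"
  have r: "restrict (x(cq A' := v)) (circles D' A') = x'"
    unfolding x'_def v_def using Z2s_cq Z1s_M c_def by (auto simp: restrict_def)
  have "dn (arcs D, x) = ((A', restrict (x(cq A' := v)) (circles D' A')), True)"
    unfolding dn_def fst_conv snd_conv Aeq v_def[symmetric] using A1 by simp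
  thus ?thesis using r by simp
qed

lemma dn_bot: "dn ({}, y) = (({}, y'), False)" unfolding dn_def y'_def by simp

lemma absorb': "leq D' a e \<Longrightarrow> snd a (cq (fst a)) = xminus \<Longrightarrow> snd e (cq (fst e)) = xminus"
  unfolding leq_def
proof (induction rule: rtranclp_induct)
  case base thus ?case .
next
  case (step e1 e2)
  obtain B l where e1: "e1 = (B,l)" by (cases e1)
  obtain B2 l2 where e2: "e2 = (B2,l2)" by (cases e2)
  have "l (ccomp (sedges D' B) (q,True)) = xminus" using step e1 unfolding cq_def by simp
  from absorb[OF step(2)[unfolded e1 e2] _ this] q_pts' show ?case unfolding e2 cq_def by simp
qed

lemma step_inv': assumes "step D' e1 e2" shows "fst e2 \<subseteq> A' \<and> snd e2 \<in> extensional (circles D' (fst e2))"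
proof -
  obtain B l where e1: "e1 = (B,l)" by (cases e1)
  obtain B2 l2 where e2: "e2 = (B2,l2)" by (cases e2)
  from assms(1) show ?thesis unfolding e1 e2 step_simp by auto
qed

lemma Ppos'_inv: assumes "e \<in> Ppos D' x' y'" shows "invD' e"
proof -
  have l1: "leq D' ({},y') e" and l2: "leq D' e (A',x')" using assms unfolding Ppos_def by auto
  have "(step D')\<^sup>*\<^sup>* ({},y') e \<Longrightarrow> fst e \<subseteq> A' \<and> snd e \<in> extensional (circles D' (fst e))"
  proof (induction rule: rtranclp_induct)
    case base
    have "y' \<in> extensional (circles D' {})" unfolding y'_def by (rule restrict_extensional)
    thus ?case by simp
  next
    case (step e1 e2)
    thus ?case using step_inv'[of e1 e2] by blast
  qed
  hence a: "fst e \<subseteq> A' \<and> snd e \<in> extensional (circles D' (fst e))" using l1 unfolding leq_def by blast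
  have "c = xminus \<longrightarrow> snd e (cq (fst e)) = xplus"
  proof
    assume cm: "c = xminus"
    show "snd e (cq (fst e)) = xplus"
    proof (rule ccontr)
      assume "snd e (cq (fst e)) \<noteq> xplus"
      hence "snd e (cq (fst e)) = xminus" by (simp add: lab_neq)
      from absorb'[OF l2 this] have "x' (cq A') = xminus" by simp
      thus False using x'_cq cm by simp
    qed
  qed
  thus ?thesis unfolding invD'_def using a by blast
qed

lemma ext_eq: "f \<in> extensional S \<Longrightarrow> C \<notin> S \<Longrightarrow> f C = undefined" unfolding extensional_def by blast

lemma invD_M: assumes "invD (B,l)" "A1 \<in> B" "c \<noteq> xplus" shows "l (cq (B - {A1}) \<union> Z1) = xminus"
proof -
  have B0: "B - {A1} \<subseteq> A'" using assms(1) unfolding invD_def A'_def by auto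
  have "B = insert A1 (B - {A1})" using assms(2) by blast
  hence "ccomp (sedges D B) (p,True) = cq (B - {A1}) \<union> Z1" using pcomp_D[OF B0] by metis
  moreover have "c = xminus" using assms(3) by (simp add: lab_neq)
  ultimately show ?thesis using assms(1) unfolding invD_def by simp
qed

lemma updn: assumes "invD e" shows "up (dn e) = e"
proof -
  obtain B l where e: "e = (B,l)" by (cases e)
  have Bs: "B \<subseteq> arcs D" and ex: "l \<in> extensional (circles D B)" using assms unfolding invD_def e by auto
  show ?thesis
  proof (cases "A1 \<in> B")
    case False
    have B: "B \<subseteq> A'" using Bs False unfolding A'_def by blast
    have lz: "l Z1 = c" using assms False unfolding invD_def e by simp
    have "(restrict l (circles D' B))(Z1 := c) = l"
    proof
      fix C show "((restrict l (circles D' B))(Z1 := c)) C = l C"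
        using lz ext_eq[OF ex, of C] circles_L1[OF B] by (cases "C = Z1") auto
    qed
    thus ?thesis unfolding e dn_def up_def using False by simp
  next
    case True
    define B0 where "B0 = B - {A1}"
    have B0: "B0 \<subseteq> A'" using Bs unfolding B0_def A'_def by blast
    have BB: "insert A1 B0 = B" using True unfolding B0_def by blast
    define M where "M = cq B0 \<union> Z1"
    define v where "v = (if c = xplus then l M else xplus)"
    define L0 where "L0 = restrict (l(cq B0 := v)) (circles D' B0)"
    have dn: "dn (B,l) = ((B0, L0), True)" unfolding dn_def L0_def v_def M_def B0_def using True by simp
    have L0q: "L0 (cq B0) = v" unfolding L0_def using cq_circ by simp
    have w: "(if c = xplus then L0 (cq B0) else xminus) = l M"
      using L0q invD_M[OF assms[unfolded e] True] unfolding v_def M_def B0_def by auto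
    have MN: "M \<noteq> cq B0" unfolding M_def using M_ne[OF B0] .
    have cD: "circles D B = insert M (circles D' B0 - {cq B0})" using L2_circles[OF B0] BB unfolding M_def by simp
    have "(L0(cq B0 := undefined))(M := l M) = l"
    proof
      fix C
      show "((L0(cq B0 := undefined))(M := l M)) C = l C"
      proof (cases "C = M")
        case True thus ?thesis by simp
      next
        case CM: False
        show ?thesis
        proof (cases "C = cq B0")
          case True thus ?thesis using CM ext_eq[OF ex, of C] cD by simp
        next
          case False thus ?thesis using CM ext_eq[OF ex, of C] cD unfolding L0_def by auto
        qed
      qed
    qed
    moreover have "up (dn (B,l)) = (insert A1 B0, (L0(cq B0 := undefined))(cq B0 \<union> Z1 := (if c = xplus then L0 (cq B0) else xminus)))"
      unfolding dn up_def by simp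
    ultimately show ?thesis unfolding e using BB w unfolding M_def by simp
  qed
qed

lemma dnup: assumes "invD' (B,l')" shows "dn (up ((B,l'),b)) = ((B,l'),b)"
proof -
  have B: "B \<subseteq> A'" and ex: "l' \<in> extensional (circles D' B)" and cm: "c = xminus \<longrightarrow> l' (cq B) = xplus"
    using assms unfolding invD'_def by auto
  have A1B: "A1 \<notin> B" using B unfolding A'_def by blast
  show ?thesis
  proof (cases b)
    case False
    have "restrict (l'(Z1 := c)) (circles D' B) = l'"
    proof
      fix C show "restrict (l'(Z1 := c)) (circles D' B) C = l' C"
        using Z1_notin[OF B] ext_eq[OF ex, of C] by (cases "C \<in> circles D' B") auto
    qed
    thus ?thesis unfolding up_def dn_def using False A1B by simp
  next
    case True
    define M where "M = cq B \<union> Z1"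
    define L where "L = (l'(cq B := undefined))(M := (if c = xplus then l' (cq B) else xminus))"
    have up: "up ((B,l'),b) = (insert A1 B, L)" unfolding up_def L_def M_def using True by simp
    have BB: "insert A1 B - {A1} = B" using A1B by blast
    have MN: "M \<noteq> cq B" unfolding M_def using M_ne[OF B] .
    have Mn: "M \<notin> circles D' B" unfolding M_def using M_notin[OF B] .
    have v: "(if c = xplus then L M else xplus) = l' (cq B)" unfolding L_def using cm by (auto simp: lab_neq)
    have "restrict (L(cq B := l' (cq B))) (circles D' B) = l'"
    proof
      fix C show "restrict (L(cq B := l' (cq B))) (circles D' B) C = l' C"
      proof (cases "C \<in> circles D' B")
        case True
        hence "C \<noteq> M" using Mn by blast
        thus ?thesis using True unfolding L_def by simp
      next
        case False thus ?thesis using ext_eq[OF ex] by simp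
      qed
    qed
    moreover have "dn (insert A1 B, L) = ((B, restrict (L(cq B := (if c = xplus then L M else xplus))) (circles D' B)), True)"
      unfolding dn_def BB M_def using A1B by simp
    ultimately show ?thesis unfolding up using True v by simp
  qed
qed

lemma corr_dn: assumes "invD (B,l)" "A1 \<in> B" shows "corr1 (B - {A1}) l (snd (fst (dn (B,l))))"
proof -
  define B0 where "B0 = B - {A1}"
  have Bs: "B \<subseteq> arcs D" and ex: "l \<in> extensional (circles D B)" using assms unfolding invD_def by auto
  have BB: "insert A1 B0 = B" using assms(2) unfolding B0_def by blast
  define v where "v = (if c = xplus then l (cq B0 \<union> Z1) else xplus)"
  have dn: "snd (fst (dn (B,l))) = restrict (l(cq B0 := v)) (circles D' B0)"
    unfolding dn_def v_def B0_def using assms(2) by simp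
  have "c \<noteq> xplus \<Longrightarrow> l (cq B0 \<union> Z1) = xminus" using invD_M[OF assms] unfolding B0_def by simp
  thus ?thesis unfolding corr1_def dn B0_def[symmetric] BB using ex cq_circ unfolding v_def by auto
qed

lemma corr_up: assumes "invD' (B,l')" shows "corr1 B (snd (up ((B,l'),True))) l'"
proof -
  have B: "B \<subseteq> A'" and ex: "l' \<in> extensional (circles D' B)" and cm: "c = xminus \<longrightarrow> l' (cq B) = xplus"
    using assms unfolding invD'_def by auto
  define M where "M = cq B \<union> Z1"
  define w where "w = (if c = xplus then l' (cq B) else xminus)"
  define L where "L = (l'(cq B := undefined))(M := w)"
  have up: "snd (up ((B,l'),True)) = L" unfolding up_def L_def M_def w_def by simp
  have MN: "M \<noteq> cq B" unfolding M_def using M_ne[OF B] .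
  have Mn: "M \<notin> circles D' B" unfolding M_def using M_notin[OF B] .
  have e1: "L \<in> extensional (circles D (insert A1 B))"
    unfolding L2_circles[OF B] extensional_def L_def using ext_eq[OF ex] M_def by auto
  have e2: "\<forall>C\<in>circles D' B. C \<noteq> cq B \<longrightarrow> l' C = L C" unfolding L_def using Mn by auto
  have e3: "if c = xplus then l' (cq B) = L (cq B \<union> Z1) else l' (cq B) = xplus \<and> L (cq B \<union> Z1) = xminus"
    unfolding L_def w_def M_def using cm by (auto simp: lab_neq)
  show ?thesis unfolding corr1_def up using e1 e2 e3 ex by blast
qed

lemma down_step: assumes "invD e1" "invD e2" "step D e1 e2"
  shows "(snd (dn e1) = snd (dn e2) \<and> step D' (fst (dn e1)) (fst (dn e2))) \<or>
         (\<not> snd (dn e1) \<and> snd (dn e2) \<and> fst (dn e1) = fst (dn e2))"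
proof -
  obtain B l where e1: "e1 = (B,l)" by (cases e1)
  obtain B2 l2 where e2: "e2 = (B2,l2)" by (cases e2)
  from assms(3) obtain A where A: "A \<in> arcs D" "A \<notin> B" "B2 = insert A B"
    and ex: "l \<in> extensional (circles D B)" "l2 \<in> extensional (circles D B2)" "B \<subseteq> arcs D"
    unfolding e1 e2 step_simp by blast
  show ?thesis
  proof (cases "A1 \<in> B")
    case True
    define B0 where "B0 = B - {A1}"
    have B0: "B0 \<subseteq> A'" using ex(3) unfolding B0_def A'_def by blast
    have AA: "A \<in> A'" "A \<notin> B0" using A True unfolding A'_def B0_def by auto
    have BB: "B = insert A1 B0" using True unfolding B0_def by blast
    have BB2: "B2 - {A1} = insert A B0" using A(3) AA True unfolding B0_def A'_def by auto
    have d1: "dn e1 = ((B0, snd (fst (dn e1))), True)" unfolding e1 dn_def B0_def using True by simp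
    have d2: "dn e2 = ((insert A B0, snd (fst (dn e2))), True)" unfolding e2 dn_def BB2[symmetric] using True A(3) by simp
    have c1: "corr1 B0 l (snd (fst (dn e1)))" using corr_dn[of B l] assms(1) True unfolding e1 B0_def by simp
    have c2: "corr1 (insert A B0) l2 (snd (fst (dn e2)))" using corr_dn[of B2 l2] assms(2) True A(3) BB2 unfolding e2 by simp
    have "step D (insert A1 B0, l) (insert A (insert A1 B0), l2)" using assms(3) unfolding e1 e2 A(3) BB by simp
    hence "step D' (B0, snd (fst (dn e1))) (insert A B0, snd (fst (dn e2)))" using T1[OF B0 AA c1 c2] by simp
    hence "step D' (fst (dn e1)) (fst (dn e2))" using d1 d2 by (metis fst_conv)
    moreover have "snd (dn e1) = snd (dn e2)" using d1 d2 by (metis snd_conv)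
    ultimately show ?thesis by blast
  next
    case False
    have B: "B \<subseteq> A'" using ex(3) False unfolding A'_def by blast
    show ?thesis
    proof (cases "A = A1")
      case AA1: False
      have AA: "A \<in> A'" using A AA1 unfolding A'_def by blast
      have nB2: "A1 \<notin> B2" using A(3) AA1 False by blast
      have d1: "dn e1 = ((B, restrict l (circles D' B)), False)" unfolding e1 dn_def using False by simp
      have d2: "dn e2 = ((insert A B, restrict l2 (circles D' (insert A B))), False)" unfolding e2 dn_def using nB2 A(3) by simp
      have lz: "l Z1 = l2 Z1" using assms(1,2) False nB2 unfolding invD_def e1 e2 by simp
      have "step D (B,l) (insert A B,l2) \<longleftrightarrow> step D' (B,restrict l (circles D' B)) (insert A B,restrict l2 (circles D' (insert A B)))"
        using T0[OF B AA A(2)] ex lz A(3) by simp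
      hence "step D' (fst (dn e1)) (fst (dn e2))" using assms(3) d1 d2 unfolding e1 e2 A(3) by simp
      thus ?thesis using d1 d2 by simp
    next
      case True
      have BB2: "B2 - {A1} = B" using A(3) True False by blast
      have d1: "dn e1 = ((B, restrict l (circles D' B)), False)" unfolding e1 dn_def using False by simp
      have d2: "dn e2 = ((B, snd (fst (dn e2))), True)" unfolding e2 dn_def using BB2 A(3) True by simp
      have c2: "corr1 B l2 (snd (fst (dn e2)))" using corr_dn[of B2 l2] assms(2) A(3) True BB2 unfolding e2 by simp
      have lz: "l Z1 = c" using assms(1) False unfolding invD_def e1 by simp
      have "\<forall>C\<in>circles D' B. l C = snd (fst (dn e2)) C"
        using cross[OF B ex(1) lz c2] assms(3) unfolding e1 e2 A(3) True by simp
      moreover have "snd (fst (dn e2)) \<in> extensional (circles D' B)" using c2 unfolding corr1_def by blast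
      ultimately have "restrict l (circles D' B) = snd (fst (dn e2))"
      proof -
        assume h1: "\<forall>C\<in>circles D' B. l C = snd (fst (dn e2)) C" and h2: "snd (fst (dn e2)) \<in> extensional (circles D' B)"
        show ?thesis
        proof
          fix C show "restrict l (circles D' B) C = snd (fst (dn e2)) C"
            using h1 ext_eq[OF h2, of C] by (cases "C \<in> circles D' B") auto
        qed
      qed
      thus ?thesis using d1 d2 by (metis fst_conv snd_conv prod.collapse)
    qed
  qed
qed

lemma up_step: assumes "invD' e1" "invD' e2" "step D' e1 e2" shows "step D (up (e1,b)) (up (e2,b))"
proof -
  obtain B l where e1: "e1 = (B,l)" by (cases e1)
  obtain B2 l2 where e2: "e2 = (B2,l2)" by (cases e2)
  from assms(3) obtain A where A: "A \<in> A'" "A \<notin> B" "B2 = insert A B"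
    and ex: "l \<in> extensional (circles D' B)" "l2 \<in> extensional (circles D' B2)" "B \<subseteq> A'"
    unfolding e1 e2 step_simp by auto
  show ?thesis
  proof (cases b)
    case False
    have B2: "insert A B \<subseteq> A'" using A ex(3) by blast
    have u1: "up (e1,b) = (B, l(Z1 := c))" "up (e2,b) = (insert A B, l2(Z1 := c))" unfolding up_def e1 e2 A(3) using False by auto
    have x1: "l(Z1 := c) \<in> extensional (circles D B)" using ex(1) circles_L1[OF ex(3)] unfolding extensional_def by auto
    have x2: "l2(Z1 := c) \<in> extensional (circles D (insert A B))" using ex(2) circles_L1[OF B2] A(3) unfolding extensional_def by auto
    have "step D (B, l(Z1 := c)) (insert A B, l2(Z1 := c)) \<longleftrightarrow> step D' (B,l) (insert A B, l2)"
      using T0[OF ex(3) A(1,2) x1 x2 ex(1) ex(2)[unfolded A(3)]] Z1_notin[OF ex(3)] Z1_notin[OF B2] by auto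
    thus ?thesis using assms(3) u1 unfolding e1 e2 A(3) by simp
  next
    case True
    have c1: "corr1 B (snd (up ((B,l),True))) l" using corr_up assms(1) unfolding e1 by blast
    have c2: "corr1 (insert A B) (snd (up ((insert A B,l2),True))) l2" using corr_up assms(2) unfolding e2 A(3) by blast
    have u1: "up (e1,b) = (insert A1 B, snd (up ((B,l),True)))" unfolding e1 up_def using True by simp
    have u2: "up (e2,b) = (insert A (insert A1 B), snd (up ((insert A B,l2),True)))" unfolding e2 A(3) up_def using True by auto
    have s: "step D (insert A1 B, snd (up ((B,l),True))) (insert A (insert A1 B), snd (up ((insert A B,l2),True)))"
      using T1[OF ex(3) A(1,2) c1 c2] assms(3) unfolding e1 e2 A(3) by simp
    show ?thesis unfolding u1 u2 by (rule s)
  qed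
qed

lemma up_cross: assumes "invD' e" shows "step D (up (e,False)) (up (e,True))"
proof -
  obtain B l where e: "e = (B,l)" by (cases e)
  have B: "B \<subseteq> A'" and ex: "l \<in> extensional (circles D' B)" using assms unfolding invD'_def e by auto
  have c2: "corr1 B (snd (up ((B,l),True))) l" using corr_up assms unfolding e by blast
  have u1: "up (e,False) = (B, l(Z1 := c))" unfolding up_def e by simp
  have u2: "up (e,True) = (insert A1 B, snd (up ((B,l),True)))" unfolding e up_def by simp
  have x1: "l(Z1 := c) \<in> extensional (circles D B)" using ex circles_L1[OF B] unfolding extensional_def by auto
  have "\<forall>C\<in>circles D' B. (l(Z1 := c)) C = l C" using Z1_notin[OF B] by auto
  thus ?thesis using cross[OF B x1 _ c2] unfolding u1 u2 by simp
qed

lemma Ppos_mid: "a \<in> Ppos D x y \<Longrightarrow> e2 \<in> Ppos D x y \<Longrightarrow> leq D a e1 \<Longrightarrow> step D e1 e2 \<Longrightarrow> e1 \<in> Ppos D x y"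
  unfolding Ppos_def leq_def by (auto intro: rtranclp_trans converse_rtranclp_into_rtranclp)

lemma Ppos'_mid: "a \<in> Ppos D' x' y' \<Longrightarrow> e2 \<in> Ppos D' x' y' \<Longrightarrow> leq D' a e1 \<Longrightarrow> step D' e1 e2 \<Longrightarrow> e1 \<in> Ppos D' x' y'"
  unfolding Ppos_def leq_def by (auto intro: rtranclp_trans converse_rtranclp_into_rtranclp)

lemma chain_down: assumes "leq D a e" "a \<in> Ppos D x y" "e \<in> Ppos D x y"
  shows "leq D' (fst (dn a)) (fst (dn e)) \<and> snd (dn a) \<le> snd (dn e)"
proof -
  have "(step D)\<^sup>*\<^sup>* a e \<Longrightarrow> e \<in> Ppos D x y \<Longrightarrow> leq D' (fst (dn a)) (fst (dn e)) \<and> snd (dn a) \<le> snd (dn e)"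
  proof (induction rule: rtranclp_induct)
    case base thus ?case unfolding leq_def by simp
  next
    case (step e1 e2)
    have e1: "e1 \<in> Ppos D x y" using Ppos_mid[OF assms(2) step.prems] step.hyps unfolding leq_def by blast
    have IH: "leq D' (fst (dn a)) (fst (dn e1)) \<and> snd (dn a) \<le> snd (dn e1)" using step.IH e1 .
    from down_step[OF Ppos_inv[OF e1] Ppos_inv[OF step.prems] step.hyps(2)]
    show ?case
    proof
      assume h: "snd (dn e1) = snd (dn e2) \<and> step D' (fst (dn e1)) (fst (dn e2))"
      hence l: "(step D')\<^sup>*\<^sup>* (fst (dn e1)) (fst (dn e2))" by (simp add: r_into_rtranclp)
      have l0: "(step D')\<^sup>*\<^sup>* (fst (dn a)) (fst (dn e1))" using IH unfolding leq_def by blast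
      have "(step D')\<^sup>*\<^sup>* (fst (dn a)) (fst (dn e2))" using rtranclp_trans[OF l0 l] .
      moreover have "snd (dn a) \<le> snd (dn e2)" using IH h by simp
      ultimately show ?case unfolding leq_def by blast
    next
      assume h: "\<not> snd (dn e1) \<and> snd (dn e2) \<and> fst (dn e1) = fst (dn e2)"
      thus ?case using IH by auto
    qed
  qed
  thus ?thesis using assms unfolding leq_def by blast
qed

lemma chain_up: assumes "leq D' a e" "a \<in> Ppos D' x' y'" "e \<in> Ppos D' x' y'"
  shows "leq D (up (a,b)) (up (e,b))"
proof -
  have "(step D')\<^sup>*\<^sup>* a e \<Longrightarrow> e \<in> Ppos D' x' y' \<Longrightarrow> leq D (up (a,b)) (up (e,b))"
  proof (induction rule: rtranclp_induct)
    case base thus ?case unfolding leq_def by simp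
  next
    case (step e1 e2)
    have e1: "e1 \<in> Ppos D' x' y'" using Ppos'_mid[OF assms(2) step.prems] step.hyps unfolding leq_def by blast
    have "step D (up (e1,b)) (up (e2,b))" using up_step[OF Ppos'_inv[OF e1] Ppos'_inv[OF step.prems] step.hyps(2)] .
    thus ?case using step.IH[OF e1] unfolding leq_def by (metis rtranclp.rtrancl_into_rtrancl)
  qed
  thus ?thesis using assms unfolding leq_def by blast
qed

lemma chain_up_full: assumes "fst t1 \<in> Ppos D' x' y'" "fst t2 \<in> Ppos D' x' y'"
  "leq D' (fst t1) (fst t2)" "snd t1 \<le> snd t2"
  shows "leq D (up t1) (up t2)"
proof -
  obtain a1 b1 where t1: "t1 = (a1,b1)" by (cases t1)
  obtain a2 b2 where t2: "t2 = (a2,b2)" by (cases t2)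
  have a: "a1 \<in> Ppos D' x' y'" "a2 \<in> Ppos D' x' y'" "leq D' a1 a2" "b1 \<le> b2" using assms unfolding t1 t2 by auto
  show ?thesis
  proof (cases "b1 = b2")
    case True thus ?thesis using chain_up[OF a(3,1,2), of b1] unfolding t1 t2 by simp
  next
    case False
    hence s: "\<not> b1" "b2" using a(4) by auto
    have "step D (up (a1,False)) (up (a1,True))" using up_cross Ppos'_inv[OF a(1)] by blast
    moreover have "leq D (up (a1,True)) (up (a2,True))" using chain_up[OF a(3,1,2)] .
    ultimately have "leq D (up (a1,False)) (up (a2,True))" unfolding leq_def
      by (rule converse_rtranclp_into_rtranclp)
    thus ?thesis using s unfolding t1 t2 by simp
  qed
qed

lemma dec': "leq D' ({},y') (A',x')"
  using chain_down[OF top_leq bot_Ppos top_Ppos] dn_top dn_bot by simp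

lemma bot'_Ppos: "({},y') \<in> Ppos D' x' y'" and top'_Ppos: "(A',x') \<in> Ppos D' x' y'"
  unfolding Ppos_def using dec' unfolding leq_def by auto

lemma dn_Ppos: "e \<in> Ppos D x y \<Longrightarrow> dn e \<in> Ppos D' x' y' \<times> UNIV"
proof -
  assume e: "e \<in> Ppos D x y"
  have "leq D ({},y) e" "leq D e (arcs D, x)" using e unfolding Ppos_def by auto
  hence "leq D' ({},y') (fst (dn e))" "leq D' (fst (dn e)) (A',x')"
    using chain_down[OF _ bot_Ppos e] chain_down[OF _ e top_Ppos] dn_top dn_bot by auto
  thus ?thesis unfolding Ppos_def by (simp add: mem_Times_iff)
qed

lemma up_bot: "up (({},y'),False) = ({},y)" using updn[OF bot_inv] dn_bot by simp
lemma up_top: "up ((A',x'),True) = (arcs D,x)" using updn[OF Ppos_inv[OF top_Ppos]] dn_top by simp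

lemma up_Ppos: "t \<in> Ppos D' x' y' \<times> UNIV \<Longrightarrow> up t \<in> Ppos D x y"
proof -
  assume t: "t \<in> Ppos D' x' y' \<times> UNIV"
  have t1: "fst t \<in> Ppos D' x' y'" using t by auto
  have "leq D' ({},y') (fst t)" "leq D' (fst t) (A',x')" using t1 unfolding Ppos_def by auto
  hence "leq D (up (({},y'),False)) (up t)" "leq D (up t) (up ((A',x'),True))"
    using chain_up_full[of "(({},y'),False)" t] chain_up_full[of t "((A',x'),True)"] t1 bot'_Ppos top'_Ppos by auto
  thus ?thesis unfolding up_bot up_top Ppos_def by simp
qed

lemma main_loc: "decorated D' x' y' \<and>
   (\<exists>f. order_iso_betw (leq D) (Ppos D x y) (\<lambda>a b. leq D' (fst a) (fst b) \<and> snd a \<le> snd b) (Ppos D' x' y' \<times> (UNIV :: bool set)) f)"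
proof
  have "y' \<in> extensional (circles D' {})" unfolding y'_def by (rule restrict_extensional)
  moreover have "x' \<in> extensional (circles D' (arcs D'))" unfolding x'_def by (rule restrict_extensional)
  ultimately show "decorated D' x' y'" unfolding decorated_def using wf' dec' by simp
next
  have bij: "bij_betw dn (Ppos D x y) (Ppos D' x' y' \<times> UNIV)"
  proof (rule bij_betw_byWitness[where f'=up])
    show "\<forall>a\<in>Ppos D x y. up (dn a) = a" using updn Ppos_inv by blast
    show "\<forall>a'\<in>Ppos D' x' y' \<times> UNIV. dn (up a') = a'" using dnup Ppos'_inv by (metis mem_Times_iff prod.collapse)
    show "dn ` Ppos D x y \<subseteq> Ppos D' x' y' \<times> UNIV" using dn_Ppos by blast
    show "up ` (Ppos D' x' y' \<times> UNIV) \<subseteq> Ppos D x y" using up_Ppos by blast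
  qed
  have ord: "\<forall>a\<in>Ppos D x y. \<forall>b\<in>Ppos D x y. leq D a b \<longleftrightarrow> (leq D' (fst (dn a)) (fst (dn b)) \<and> snd (dn a) \<le> snd (dn b))"
  proof (intro ballI iffI)
    fix a b assume a: "a \<in> Ppos D x y" and b: "b \<in> Ppos D x y"
    { assume "leq D a b" thus "leq D' (fst (dn a)) (fst (dn b)) \<and> snd (dn a) \<le> snd (dn b)" using chain_down a b by blast }
    { assume h: "leq D' (fst (dn a)) (fst (dn b)) \<and> snd (dn a) \<le> snd (dn b)"
      have "fst (dn a) \<in> Ppos D' x' y'" "fst (dn b) \<in> Ppos D' x' y'" using dn_Ppos a b by (auto simp: mem_Times_iff)
      hence "leq D (up (dn a)) (up (dn b))" using chain_up_full h by blast
      thus "leq D a b" using updn Ppos_inv a b by metis }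
  qed
  show "\<exists>f. order_iso_betw (leq D) (Ppos D x y) (\<lambda>a b. leq D' (fst a) (fst b) \<and> snd a \<le> snd b) (Ppos D' x' y' \<times> (UNIV :: bool set)) f"
    unfolding order_iso_betw_def using bij ord by blast
qed

end

theorem mainTheorem4:
  fixes D :: "'p rconf" and x y :: "'p node set \<Rightarrow> lab"
    and Z1 Z1s Z2s :: "'p node set" and A1 :: "'p set" and p q :: 'p
  assumes "decorated D x y"
    and "leaf D Z1"
    and "A1 \<in> arcs D" and "A1 = {p, q}" and "on_circle p Z1"
    and "Z1s \<in> circles D (arcs D)" and "dual_arc_circle A1 Z1s"
    and "Z2s \<in> circles D (arcs D - {A1})" and "Z2s \<noteq> Z1" and "\<exists>r\<in>A1. on_circle r Z2s"
  shows "let D' = delete_circ_arc D Z1 A1;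
             y' = restrict y (circles D' {});
             x' = restrict (\<lambda>C. if C = Z2s then (if y Z1 = xplus then x Z1s else xplus) else x C)
                           (circles D' (arcs D'))
         in decorated D' x' y' \<and>
            (\<exists>f. order_iso_betw (leq D) (Ppos D x y)
                   (\<lambda>a b. leq D' (fst a) (fst b) \<and> snd a \<le> snd b)
                   (Ppos D' x' y' \<times> (UNIV :: bool set)) f)"
proof -
  interpret leafset D x y Z1 Z1s Z2s A1 p q using assms by unfold_locales
  show ?thesis using main_loc unfolding Let_def D'_def x'_def y'_def by simp
qed


end
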